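(* Let $G$ be an amenable Hausdorff topological group, locally compact or SIN, acting continuously by isometries on a pointed metric space $(\mathcal{M},d,0)$ with bounded orbits; let $M$ be a bi-invariant mean on $G$ and $X=\mathcal{F}(\mathcal{M})$. Suppose $Q:X^{**}\to X^{**}$ is a bounded linear projection with $Q[X^{**}]=\kappa_X(X)$ and $T_g^{**}(\ker Q)\subset\ker Q$ for every $g\in G$. Let $R_G:X\to X^{**}$, $R_G(\mu)(f)=M(g\mapsto f(T_g\mu))$, let $P_G:=\kappa_X^{-1}\circ Q\circ R_G$ (a projection onto $I_G=\{\mu\in X: T_g\mu=\mu\ \forall g\}$), and let $\Psi:\mathrm{Lip}_0(\mathcal{M}/G)\to\mathrm{Lip}_0^G(\mathcal{M})$, $\Psi(f)(x)=f([Gx])$. If $Y\subset\mathrm{Lip}_0(\mathcal{M}/G)$ separates the points of $\mathcal{F}(\mathcal{M}/G)$ and $\ker P_G\subset\Psi(Y)_\perp$, then $\ker P_G=\mathrm{Lip}_0^G(\mathcal{M})_\perp$ and $P_G[X]$ is isomorphic to $\mathcal{F}(\mathcal{M}/G)$ via a linear isomorphism $T:\mathcal{F}(\mathcal{M}/G)\to P_G[X]$ with $T(\delta([Gx]))=P_G(\delta(x))$ whose inverse is the restriction to $P_G[X]$ of the norm-at-most-one operator $S:\mathcal{F}(\mathcal{M})\to\mathcal{F}(\mathcal{M}/G)$, $S(\delta(x))=\delta([Gx])$, and $\|T\|\le\|Q\|$. In particular $\mathcal{F}(\mathcal{M}/G)$ is isomorphic to a complemented subspace of $\mathcal{F}(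\mathcal{M})$.
   Context: $\mathrm{Lip}_0(N)$: real Lipschitz functions on a pointed metric space $N$ vanishing at the base point, normed by the Lipschitz constant; $\delta(m)$ evaluation at $m$; $\mathcal{F}(N)=\overline{\mathrm{span}}\{\delta(m):m\in N\}\subset\mathrm{Lip}_0(N)^*$, so $\mathcal{F}(N)^*=\mathrm{Lip}_0(N)$. $\kappa_X:X\to X^{**}$ is the canonical embedding; for $A\subset X^*$, $A_\perp=\{x\in X:a(x)=0\ \forall a\in A\}$. For $g\in G$, $T_g$ is the linear isometry of $\mathcal{F}(\mathcal{M})$ with $T_g\delta(m)=\delta(gm)-\delta(g0)$. $\mathcal{M}/G=\{[Gx]:x\in\mathcal{M}\}$ with $[Gx]=\overline{Gx}$, metric $d_{\mathcal{M}/G}([Gx],[Gy])=\inf\{d(x',y'):x'\in[Gx],y'\in[Gy]\}$ (the Hausdorff distance), base point $[G0]$. $\mathrm{Lip}_0^G(\mathcal{M})=\{f\in\mathrm{Lip}_0(\mathcal{M}):f(gx)=f(x)\ \forall g,x\}$. "$Y$ separates the points of $\mathcal{F}(\mathcal{M}/G)$": for every nonzero $\mu\in\mathcal{F}(\mathcal{M}/G)$ some $f\in Y$ has $f(\mu)\ne0$. A bi-invariant mean is a positive normalized linear functional invariant under left and right translations (on bounded uniformly continuous functions for SIN $G$; on $L_\infty(G)$ for locally compact amenable $G$). SIN: every neighborhood $U$ of $e$ contains a neighborhood $V$ of $e$ with $gVg^{-1}=V$ for all $g$. *)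

theory Defs
  imports "HOL-Analysis.Analysis" "HOL-Algebra.Group"
begin

text \<open>Functionals on Lip_0 are represented as maps of type (b => real) => real.
  Since F(N)* = Lip_0(N), the bidual F(N)** is Lip_0(N)*, and kappa is the inclusion
  of F(N) into Lip_0(N)*.\<close>

definition lipconst :: "'b set \<Rightarrow> ('b \<Rightarrow> 'b \<Rightarrow> real) \<Rightarrow> ('b \<Rightarrow> real) \<Rightarrow> real" where
  "lipconst S d f = Sup (insert 0 {\<bar>f x - f y\<bar> / d x y | x y. x \<in> S \<and> y \<in> S \<and> x \<noteq> y})"

definition Lip0 :: "'b set \<Rightarrow> ('b \<Rightarrow> 'b \<Rightarrow> real) \<Rightarrow> 'b \<Rightarrow> ('b \<Rightarrow> real) set" where
  "Lip0 S d p = {f. (\<exists>C. \<forall>x\<in>S. \<forall>y\<in>S. \<bar>f x - f y\<bar> \<le> C * d x y) \<and> f p = 0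
                    \<and> (\<forall>x. x \<notin> S \<longrightarrow> f x = 0)}"

definition LipDual :: "'b set \<Rightarrow> ('b \<Rightarrow> 'b \<Rightarrow> real) \<Rightarrow> 'b \<Rightarrow> (('b \<Rightarrow> real) \<Rightarrow> real) set" where
  "LipDual S d p = {\<phi>.
      (\<forall>f\<in>Lip0 S d p. \<forall>g\<in>Lip0 S d p. \<phi> (\<lambda>x. f x + g x) = \<phi> f + \<phi> g)
    \<and> (\<forall>c. \<forall>f\<in>Lip0 S d p. \<phi> (\<lambda>x. c * f x) = c * \<phi> f)
    \<and> (\<exists>C. \<forall>f\<in>Lip0 S d p. \<bar>\<phi> f\<bar> \<le> C * lipconst S d f)
    \<and> (\<forall>f. f \<notin> Lip0 S d p \<longrightarrow> \<phi> f = 0)}"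

definition fnorm :: "'b set \<Rightarrow> ('b \<Rightarrow> 'b \<Rightarrow> real) \<Rightarrow> 'b \<Rightarrow> (('b \<Rightarrow> real) \<Rightarrow> real) \<Rightarrow> real" where
  "fnorm S d p \<phi> = Sup (insert 0 {\<bar>\<phi> f\<bar> | f. f \<in> Lip0 S d p \<and> lipconst S d f \<le> 1})"

definition delta :: "'b set \<Rightarrow> ('b \<Rightarrow> 'b \<Rightarrow> real) \<Rightarrow> 'b \<Rightarrow> 'b \<Rightarrow> ('b \<Rightarrow> real) \<Rightarrow> real" where
  "delta S d p m = (\<lambda>f. if f \<in> Lip0 S d p then f m else 0)"

definition zerof :: "('b \<Rightarrow> real) \<Rightarrow> real" where
  "zerof = (\<lambda>f. 0)"

definition DeltaSpan :: "'b set \<Rightarrow> ('b \<Rightarrow> 'b \<Rightarrow> real) \<Rightarrow> 'b \<Rightarrow> (('b \<Rightarrow> real) \<Rightarrow> real) set" where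
  "DeltaSpan S d p = {(\<lambda>f. \<Sum>i<n. c i * delta S d p (m i) f) | (n::nat) c m. \<forall>i<n. m i \<in> S}"

definition Free :: "'b set \<Rightarrow> ('b \<Rightarrow> 'b \<Rightarrow> real) \<Rightarrow> 'b \<Rightarrow> (('b \<Rightarrow> real) \<Rightarrow> real) set" where
  "Free S d p = {\<phi> \<in> LipDual S d p. \<forall>e>0. \<exists>\<psi>\<in>DeltaSpan S d p. fnorm S d p (\<lambda>f. \<phi> f - \<psi> f) < e}"

definition preannih :: "'b set \<Rightarrow> ('b \<Rightarrow> 'b \<Rightarrow> real) \<Rightarrow> 'b \<Rightarrow> ('b \<Rightarrow> real) set \<Rightarrow> (('b \<Rightarrow> real) \<Rightarrow> real) set" where
  "preannih S d p A = {\<mu> \<in> Free S d p. \<forall>f\<in>A. \<mu> f = 0}"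

definition lin_on :: "(('b \<Rightarrow> real) \<Rightarrow> real) set \<Rightarrow> ((('b \<Rightarrow> real) \<Rightarrow> real) \<Rightarrow> (('c \<Rightarrow> real) \<Rightarrow> real)) \<Rightarrow> bool" where
  "lin_on D A \<longleftrightarrow> (\<forall>\<phi>\<in>D. \<forall>\<psi>\<in>D. A (\<lambda>f. \<phi> f + \<psi> f) = (\<lambda>f. A \<phi> f + A \<psi> f))
                 \<and> (\<forall>c. \<forall>\<phi>\<in>D. A (\<lambda>f. c * \<phi> f) = (\<lambda>f. c * A \<phi> f))"

text \<open>Operator norm of A on D (meaningful when A is bounded on D).\<close>
definition opnorm_on :: "(('b \<Rightarrow> real) \<Rightarrow> real) set \<Rightarrow> ((('b \<Rightarrow> real) \<Rightarrow> real) \<Rightarrow> real)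
     \<Rightarrow> ((('c \<Rightarrow> real) \<Rightarrow> real) \<Rightarrow> real) \<Rightarrow> ((('b \<Rightarrow> real) \<Rightarrow> real) \<Rightarrow> (('c \<Rightarrow> real) \<Rightarrow> real)) \<Rightarrow> real" where
  "opnorm_on D n1 n2 A = Sup (insert 0 {n2 (A \<phi>) | \<phi>. \<phi> \<in> D \<and> n1 \<phi> \<le> 1})"

definition topological_group :: "'g topology \<Rightarrow> ('g, 'x) monoid_scheme \<Rightarrow> bool" where
  "topological_group \<tau> G \<longleftrightarrow> group G \<and> topspace \<tau> = carrier G
     \<and> continuous_map (prod_topology \<tau> \<tau>) \<tau> (\<lambda>(g, h). g \<otimes>\<^bsub>G\<^esub> h)
     \<and> continuous_map \<tau> \<tau> (\<lambda>g. inv\<^bsub>G\<^esub> g)"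

text \<open>SIN: small invariant neighbourhoods (open neighbourhoods suffice since conjugation is a homeomorphism).\<close>
definition SIN :: "'g topology \<Rightarrow> ('g, 'x) monoid_scheme \<Rightarrow> bool" where
  "SIN \<tau> G \<longleftrightarrow> (\<forall>U. openin \<tau> U \<and> \<one>\<^bsub>G\<^esub> \<in> U \<longrightarrow>
      (\<exists>V. openin \<tau> V \<and> \<one>\<^bsub>G\<^esub> \<in> V \<and> V \<subseteq> U \<and>
           (\<forall>g\<in>carrier G. (\<lambda>v. g \<otimes>\<^bsub>G\<^esub> v \<otimes>\<^bsub>G\<^esub> inv\<^bsub>G\<^esub> g) ` V = V)))"

text \<open>Bounded uniformly continuous real functions on the group (left and right uniformities;
  they coincide for SIN groups).\<close>
definition BUC :: "'g topology \<Rightarrow> ('g, 'x) monoid_scheme \<Rightarrow> ('g \<Rightarrow> real) set" where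
  "BUC \<tau> G = {F. (\<exists>C. \<forall>g\<in>carrier G. \<bar>F g\<bar> \<le> C) \<and>
      (\<forall>e>0. \<exists>U. openin \<tau> U \<and> \<one>\<^bsub>G\<^esub> \<in> U \<and>
         (\<forall>g\<in>carrier G. \<forall>h\<in>U. \<bar>F (g \<otimes>\<^bsub>G\<^esub> h) - F g\<bar> < e \<and> \<bar>F (h \<otimes>\<^bsub>G\<^esub> g) - F g\<bar> < e))}"

definition bi_invariant_mean_BUC :: "'g topology \<Rightarrow> ('g, 'x) monoid_scheme \<Rightarrow> (('g \<Rightarrow> real) \<Rightarrow> real) \<Rightarrow> bool" where
  "bi_invariant_mean_BUC \<tau> G M \<longleftrightarrow>
      (\<forall>F\<in>BUC \<tau> G. \<forall>F'\<in>BUC \<tau> G. (\<forall>g\<in>carrier G. F g = F' g) \<longrightarrow> M F = M F')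
    \<and> (\<forall>F\<in>BUC \<tau> G. \<forall>F'\<in>BUC \<tau> G. M (\<lambda>g. F g + F' g) = M F + M F')
    \<and> (\<forall>c. \<forall>F\<in>BUC \<tau> G. M (\<lambda>g. c * F g) = c * M F)
    \<and> (\<forall>F\<in>BUC \<tau> G. (\<forall>g\<in>carrier G. F g \<ge> 0) \<longrightarrow> M F \<ge> 0)
    \<and> M (\<lambda>g. 1) = 1
    \<and> (\<forall>F\<in>BUC \<tau> G. \<forall>h\<in>carrier G.
          M (\<lambda>g. F (h \<otimes>\<^bsub>G\<^esub> g)) = M F \<and> M (\<lambda>g. F (g \<otimes>\<^bsub>G\<^esub> h)) = M F)"

definition left_haar_measure :: "'g topology \<Rightarrow> ('g, 'x) monoid_scheme \<Rightarrow> 'g measure \<Rightarrow> bool" where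
  "left_haar_measure \<tau> G H \<longleftrightarrow>
      space H = topspace \<tau>
    \<and> sets H = sigma_sets (topspace \<tau>) {U. openin \<tau> U}
    \<and> (\<forall>g\<in>carrier G. \<forall>A\<in>sets H. emeasure H ((\<lambda>x. g \<otimes>\<^bsub>G\<^esub> x) ` A) = emeasure H A)
    \<and> (\<forall>K. compactin \<tau> K \<longrightarrow> emeasure H K < \<infinity>)
    \<and> (\<forall>U. openin \<tau> U \<and> U \<noteq> {} \<longrightarrow> emeasure H U > 0)
    \<and> (\<forall>A\<in>sets H. emeasure H A = (INF U\<in>{U. openin \<tau> U \<and> A \<subseteq> U}. emeasure H U))
    \<and> (\<forall>U. openin \<tau> U \<longrightarrow> emeasure H U = (SUP K\<in>{K. compactin \<tau> K \<and> K \<subseteq> U}. emeasure H K))"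

text \<open>L_infty(G) represented by essentially bounded measurable functions; the mean must respect
  equality almost everywhere, hence is a functional on L_infty(G).\<close>
definition Linf :: "'g measure \<Rightarrow> ('g \<Rightarrow> real) set" where
  "Linf H = {F. F \<in> borel_measurable H \<and> (\<exists>C. AE g in H. \<bar>F g\<bar> \<le> C)}"

definition bi_invariant_mean_Linf :: "('g, 'x) monoid_scheme \<Rightarrow> 'g measure \<Rightarrow> (('g \<Rightarrow> real) \<Rightarrow> real) \<Rightarrow> bool" where
  "bi_invariant_mean_Linf G H M \<longleftrightarrow>
      (\<forall>F\<in>Linf H. \<forall>F'\<in>Linf H. (AE g in H. F g = F' g) \<longrightarrow> M F = M F')
    \<and> (\<forall>F\<in>Linf H. \<forall>F'\<in>Linf H. M (\<lambda>g. F g + F' g) = M F + M F')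
    \<and> (\<forall>c. \<forall>F\<in>Linf H. M (\<lambda>g. c * F g) = c * M F)
    \<and> (\<forall>F\<in>Linf H. (AE g in H. F g \<ge> 0) \<longrightarrow> M F \<ge> 0)
    \<and> M (\<lambda>g. 1) = 1
    \<and> (\<forall>F\<in>Linf H. \<forall>h\<in>carrier G.
          M (\<lambda>g. F (h \<otimes>\<^bsub>G\<^esub> g)) = M F \<and> M (\<lambda>g. F (g \<otimes>\<^bsub>G\<^esub> h)) = M F)"

definition isometric_action :: "'g topology \<Rightarrow> ('g, 'x) monoid_scheme \<Rightarrow> ('g \<Rightarrow> 'a::metric_space \<Rightarrow> 'a) \<Rightarrow> bool" where
  "isometric_action \<tau> G act \<longleftrightarrow>
      (\<forall>x. act \<one>\<^bsub>G\<^esub> x = x)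
    \<and> (\<forall>g\<in>carrier G. \<forall>h\<in>carrier G. \<forall>x. act (g \<otimes>\<^bsub>G\<^esub> h) x = act g (act h x))
    \<and> (\<forall>g\<in>carrier G. \<forall>x y. dist (act g x) (act g y) = dist x y)
    \<and> continuous_map (prod_topology \<tau> euclidean) euclidean (\<lambda>(g, x). act g x)"

definition orbcl :: "('g, 'x) monoid_scheme \<Rightarrow> ('g \<Rightarrow> 'a::metric_space \<Rightarrow> 'a) \<Rightarrow> 'a \<Rightarrow> 'a set" where
  "orbcl G act x = closure ((\<lambda>g. act g x) ` carrier G)"

definition quot_space :: "('g, 'x) monoid_scheme \<Rightarrow> ('g \<Rightarrow> 'a::metric_space \<Rightarrow> 'a) \<Rightarrow> 'a set set" where
  "quot_space G act = range (orbcl G act)"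

definition quot_dist :: "'a::metric_space set \<Rightarrow> 'a set \<Rightarrow> real" where
  "quot_dist A B = Inf {dist x y | x y. x \<in> A \<and> y \<in> B}"

abbreviation LipM :: "'a::metric_space \<Rightarrow> ('a \<Rightarrow> real) set" where
  "LipM z0 \<equiv> Lip0 UNIV dist z0"

definition Lip0G :: "('g, 'x) monoid_scheme \<Rightarrow> ('g \<Rightarrow> 'a::metric_space \<Rightarrow> 'a) \<Rightarrow> 'a \<Rightarrow> ('a \<Rightarrow> real) set" where
  "Lip0G G act z0 = {f \<in> Lip0 UNIV dist z0. \<forall>g\<in>carrier G. \<forall>x. f (act g x) = f x}"

text \<open>The bidual operator T_g** on F(M)** = Lip_0(M)*: (T_g** phi)(f) = phi(T_g* f), where
  (T_g* f)(m) = f(g m) - f(g 0). On F(M) it restricts to T_g (T_g delta(m) = delta(gm) - delta(g0)).\<close>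
definition Tgdd :: "('g \<Rightarrow> 'a::metric_space \<Rightarrow> 'a) \<Rightarrow> 'a \<Rightarrow> 'g \<Rightarrow> (('a \<Rightarrow> real) \<Rightarrow> real) \<Rightarrow> (('a \<Rightarrow> real) \<Rightarrow> real)" where
  "Tgdd act z0 g \<phi> = (\<lambda>f. if f \<in> Lip0 UNIV dist z0 then \<phi> (\<lambda>m. f (act g m) - f (act g z0)) else 0)"

definition RG :: "('g \<Rightarrow> 'a::metric_space \<Rightarrow> 'a) \<Rightarrow> 'a \<Rightarrow> (('g \<Rightarrow> real) \<Rightarrow> real) \<Rightarrow> (('a \<Rightarrow> real) \<Rightarrow> real) \<Rightarrow> (('a \<Rightarrow> real) \<Rightarrow> real)" where
  "RG act z0 M \<mu> = (\<lambda>f. if f \<in> Lip0 UNIV dist z0 then M (\<lambda>g. Tgdd act z0 g \<mu> f) else 0)"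

text \<open>P_G = kappa^{-1} o Q o R_G (kappa is the inclusion F(M) into Lip_0(M)*).\<close>
definition PG :: "('g \<Rightarrow> 'a::metric_space \<Rightarrow> 'a) \<Rightarrow> 'a \<Rightarrow> (('g \<Rightarrow> real) \<Rightarrow> real)
      \<Rightarrow> ((('a \<Rightarrow> real) \<Rightarrow> real) \<Rightarrow> (('a \<Rightarrow> real) \<Rightarrow> real)) \<Rightarrow> (('a \<Rightarrow> real) \<Rightarrow> real) \<Rightarrow> (('a \<Rightarrow> real) \<Rightarrow> real)" where
  "PG act z0 M Q \<mu> = Q (RG act z0 M \<mu>)"

definition Psi :: "('g, 'x) monoid_scheme \<Rightarrow> ('g \<Rightarrow> 'a::metric_space \<Rightarrow> 'a) \<Rightarrow> ('a set \<Rightarrow> real) \<Rightarrow> ('a \<Rightarrow> real)" where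
  "Psi G act f = (\<lambda>x. f (orbcl G act x))"

end

theory Submission
  imports Defs
begin

lemma sum_split_nat: "(\<Sum>i<n+k. F i) = (\<Sum>i<n. F i) + (\<Sum>i<k. F (n+i::nat))"
  by (induct k) (auto simp: add.commute add.left_commute)


locale pms =
  fixes S :: "'b set" and d :: "'b \<Rightarrow> 'b \<Rightarrow> real" and p :: 'b
  assumes dnn: "\<And>x y. x \<in> S \<Longrightarrow> y \<in> S \<Longrightarrow> d x y \<ge> 0"
    and pS: "p \<in> S"
begin

abbreviation "L0 \<equiv> Lip0 S d p"
abbreviation "LD \<equiv> LipDual S d p"
abbreviation "lc \<equiv> lipconst S d"
abbreviation "fn \<equiv> fnorm S d p"

lemma lip_bdd:
  assumes "f \<in> L0"
  shows "bdd_above (insert 0 {\<bar>f x - f y\<bar> / d x y | x y. x \<in> S \<and> y \<in> S \<and> x \<noteq> y})"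
proof -
  obtain C where C: "\<forall>x\<in>S. \<forall>y\<in>S. \<bar>f x - f y\<bar> \<le> C * d x y" using assms by (auto simp: Lip0_def)
  show ?thesis unfolding bdd_above_def
  proof (intro exI[of _ "\<bar>C\<bar>"] ballI)
    fix z assume "z \<in> insert 0 {\<bar>f x - f y\<bar> / d x y | x y. x \<in> S \<and> y \<in> S \<and> x \<noteq> y}"
    then consider "z = 0" | x y where "x \<in> S" "y \<in> S" "z = \<bar>f x - f y\<bar> / d x y" by auto
    then show "z \<le> \<bar>C\<bar>"
    proof cases
      case 2
      have d0: "d x y \<ge> 0" using dnn 2 by auto
      have le: "\<bar>f x - f y\<bar> \<le> C * d x y" using C 2 by auto
      show ?thesis
      proof (cases "d x y = 0")
        case True then show ?thesis using 2 by simp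
      next
        case False
        then have "d x y > 0" using d0 by simp
        then have "\<bar>f x - f y\<bar> / d x y \<le> C" using le by (simp add: divide_le_eq)
        then show ?thesis using 2 by linarith
      qed
    qed simp
  qed
qed

lemma lc_nonneg: "f \<in> L0 \<Longrightarrow> lc f \<ge> 0"
  unfolding lipconst_def by (rule cSup_upper[OF _ lip_bdd]) auto

lemma lc_bound:
  assumes "f \<in> L0" "x \<in> S" "y \<in> S"
  shows "\<bar>f x - f y\<bar> \<le> lc f * d x y"
proof -
  obtain C where C: "\<forall>x\<in>S. \<forall>y\<in>S. \<bar>f x - f y\<bar> \<le> C * d x y" using assms by (auto simp: Lip0_def)
  show ?thesis
  proof (cases "d x y = 0")
    case True then show ?thesis using C assms by force
  next
    case False
    then have dp: "d x y > 0" using dnn assms by force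
    then have "x \<noteq> y \<or> x = y" by simp
    show ?thesis
    proof (cases "x = y")
      case True then show ?thesis using dp lc_nonneg[OF assms(1)] by simp
    next
      case False
      have "\<bar>f x - f y\<bar> / d x y \<le> lc f" unfolding lipconst_def
        by (rule cSup_upper[OF _ lip_bdd[OF assms(1)]]) (use assms False in auto)
      then show ?thesis using dp by (simp add: divide_le_eq mult.commute)
    qed
  qed
qed

lemma lc_le:
  assumes "L \<ge> 0" "\<And>x y. x \<in> S \<Longrightarrow> y \<in> S \<Longrightarrow> \<bar>f x - f y\<bar> \<le> L * d x y"
  shows "lc f \<le> L"
  unfolding lipconst_def
proof (rule cSup_least)
  fix z assume "z \<in> insert 0 {\<bar>f x - f y\<bar> / d x y | x y. x \<in> S \<and> y \<in> S \<and> x \<noteq> y}"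
  then consider "z = 0" | x y where "x \<in> S" "y \<in> S" "z = \<bar>f x - f y\<bar> / d x y" by auto
  then show "z \<le> L"
  proof cases
    case 2
    have d0: "d x y \<ge> 0" using dnn 2 by auto
    show ?thesis
    proof (cases "d x y = 0")
      case True then show ?thesis using 2 assms by simp
    next
      case False
      then have "d x y > 0" using d0 by simp
      then show ?thesis using 2 assms(2)[of x y] by (simp add: divide_le_eq)
    qed
  qed (use assms in simp)
qed auto

lemma L0_add: "f \<in> L0 \<Longrightarrow> g \<in> L0 \<Longrightarrow> (\<lambda>x. f x + g x) \<in> L0"
proof -
  assume f: "f \<in> L0" and g: "g \<in> L0"
  have "\<bar>(f x + g x) - (f y + g y)\<bar> \<le> (lc f + lc g) * d x y" if "x \<in> S" "y \<in> S" for x y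
    using lc_bound[OF f that] lc_bound[OF g that] by (simp add: algebra_simps abs_triangle_ineq[THEN order_trans])
  then show ?thesis using f g by (auto simp: Lip0_def)
qed

lemma L0_scale: "f \<in> L0 \<Longrightarrow> (\<lambda>x. c * f x) \<in> L0"
proof -
  assume f: "f \<in> L0"
  have "\<bar>c * f x - c * f y\<bar> \<le> (\<bar>c\<bar> * lc f) * d x y" if "x \<in> S" "y \<in> S" for x y
  proof -
    have "\<bar>c * f x - c * f y\<bar> = \<bar>c\<bar> * \<bar>f x - f y\<bar>" by (simp add: abs_mult[symmetric] algebra_simps)
    also have "\<dots> \<le> \<bar>c\<bar> * (lc f * d x y)" using lc_bound[OF f that] by (simp add: mult_left_mono)
    finally show ?thesis by simp
  qed
  then show ?thesis using f by (auto simp: Lip0_def)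
qed

lemma lc_scale: "f \<in> L0 \<Longrightarrow> lc (\<lambda>x. c * f x) \<le> \<bar>c\<bar> * lc f"
proof -
  assume f: "f \<in> L0"
  show ?thesis
  proof (rule lc_le)
    show "0 \<le> \<bar>c\<bar> * lc f" using lc_nonneg[OF f] by simp
    fix x y assume xy: "x \<in> S" "y \<in> S"
    have "\<bar>c * f x - c * f y\<bar> = \<bar>c\<bar> * \<bar>f x - f y\<bar>" by (simp add: abs_mult[symmetric] algebra_simps)
    also have "\<dots> \<le> \<bar>c\<bar> * (lc f * d x y)" using lc_bound[OF f xy] by (simp add: mult_left_mono)
    finally show "\<bar>c * f x - c * f y\<bar> \<le> \<bar>c\<bar> * lc f * d x y" by simp
  qed
qed

lemma L0_zero_lc:
  assumes "f \<in> L0" "lc f = 0" shows "f = (\<lambda>x. 0)"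
proof
  fix x show "f x = 0"
  proof (cases "x \<in> S")
    case True
    have "\<bar>f x - f p\<bar> \<le> 0" using lc_bound[OF assms(1) True pS] assms(2) by simp
    then show ?thesis using assms(1) by (simp add: Lip0_def)
  next
    case False then show ?thesis using assms(1) by (simp add: Lip0_def)
  qed
qed

lemma LD_add_app: "\<phi> \<in> LD \<Longrightarrow> f \<in> L0 \<Longrightarrow> g \<in> L0 \<Longrightarrow> \<phi> (\<lambda>x. f x + g x) = \<phi> f + \<phi> g"
  unfolding LipDual_def by blast

lemma LD_scale_app: "\<phi> \<in> LD \<Longrightarrow> f \<in> L0 \<Longrightarrow> \<phi> (\<lambda>x. c * f x) = c * \<phi> f"
  unfolding LipDual_def by blast

lemma LD_out: "\<phi> \<in> LD \<Longrightarrow> f \<notin> L0 \<Longrightarrow> \<phi> f = 0"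
  unfolding LipDual_def by blast

lemma L0_zero: "(\<lambda>x. 0) \<in> L0"
  using pS by (auto simp: Lip0_def intro: exI[of _ 0])

lemma LD_zero_fun: "\<phi> \<in> LD \<Longrightarrow> \<phi> (\<lambda>x. 0) = 0"
  using LD_scale_app[OF _ L0_zero, of \<phi> 0] by simp

lemma LD_bdd:
  assumes "\<phi> \<in> LD"
  shows "bdd_above (insert 0 {\<bar>\<phi> f\<bar> | f. f \<in> L0 \<and> lc f \<le> 1})"
proof -
  obtain C where C: "\<forall>f\<in>L0. \<bar>\<phi> f\<bar> \<le> C * lc f" using assms by (auto simp: LipDual_def)
  show ?thesis unfolding bdd_above_def
  proof (intro exI[of _ "\<bar>C\<bar>"] ballI)
    fix z assume "z \<in> insert 0 {\<bar>\<phi> f\<bar> | f. f \<in> L0 \<and> lc f \<le> 1}"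
    then consider "z = 0" | f where "f \<in> L0" "lc f \<le> 1" "z = \<bar>\<phi> f\<bar>" by auto
    then show "z \<le> \<bar>C\<bar>"
    proof cases
      case 2
      have "C * lc f \<le> \<bar>C\<bar>" using lc_nonneg[OF 2(1)] 2(2)
        by (smt (verit) mult_left_le mult_nonneg_nonneg mult_nonpos_nonneg abs_ge_self abs_mult)
      then show ?thesis using C 2 by force
    qed simp
  qed
qed

lemma fn_nonneg: "\<phi> \<in> LD \<Longrightarrow> fn \<phi> \<ge> 0"
  unfolding fnorm_def by (rule cSup_upper[OF _ LD_bdd]) auto

lemma fn_le1: "\<phi> \<in> LD \<Longrightarrow> f \<in> L0 \<Longrightarrow> lc f \<le> 1 \<Longrightarrow> \<bar>\<phi> f\<bar> \<le> fn \<phi>"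
  unfolding fnorm_def by (rule cSup_upper[OF _ LD_bdd]) auto

lemma fn_leI:
  assumes "K \<ge> 0" "\<And>f. f \<in> L0 \<Longrightarrow> lc f \<le> 1 \<Longrightarrow> \<bar>\<phi> f\<bar> \<le> K"
  shows "fn \<phi> \<le> K"
  unfolding fnorm_def by (rule cSup_least) (use assms in auto)

lemma fn_bound:
  assumes phi: "\<phi> \<in> LD" and f: "f \<in> L0"
  shows "\<bar>\<phi> f\<bar> \<le> fn \<phi> * lc f"
proof (cases "lc f = 0")
  case True
  then have "f = (\<lambda>x. 0)" using L0_zero_lc f by blast
  then show ?thesis using LD_zero_fun[OF phi] True by simp
next
  case False
  then have Lp: "lc f > 0" using lc_nonneg[OF f] by simp
  define g where "g = (\<lambda>x. (1 / lc f) * f x)"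
  have g: "g \<in> L0" unfolding g_def by (rule L0_scale[OF f])
  have "lc g \<le> \<bar>1 / lc f\<bar> * lc f" unfolding g_def by (rule lc_scale[OF f])
  also have "\<dots> = 1" using Lp by simp
  finally have "\<bar>\<phi> g\<bar> \<le> fn \<phi>" using fn_le1[OF phi g] by simp
  moreover have "\<phi> g = (1 / lc f) * \<phi> f" using phi f unfolding g_def LipDual_def by blast
  ultimately show ?thesis using Lp by (simp add: abs_mult divide_le_eq mult.commute)
qed


lemma LD_add: "\<phi> \<in> LD \<Longrightarrow> \<psi> \<in> LD \<Longrightarrow> (\<lambda>f. \<phi> f + \<psi> f) \<in> LD"
proof -
  assume a: "\<phi> \<in> LD" "\<psi> \<in> LD"
  obtain C1 where C1: "\<forall>f\<in>L0. \<bar>\<phi> f\<bar> \<le> C1 * lc f" using a by (auto simp: LipDual_def)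
  obtain C2 where C2: "\<forall>f\<in>L0. \<bar>\<psi> f\<bar> \<le> C2 * lc f" using a by (auto simp: LipDual_def)
  have "\<forall>f\<in>L0. \<bar>\<phi> f + \<psi> f\<bar> \<le> (C1 + C2) * lc f"
    using C1 C2 by (smt (verit, best) distrib_right)
  then show ?thesis using a unfolding LipDual_def by (auto simp: algebra_simps intro: exI[of _ "C1+C2"])
qed

lemma LD_scale: "\<phi> \<in> LD \<Longrightarrow> (\<lambda>f. c * \<phi> f) \<in> LD"
proof -
  assume a: "\<phi> \<in> LD"
  obtain C1 where C1: "\<forall>f\<in>L0. \<bar>\<phi> f\<bar> \<le> C1 * lc f" using a by (auto simp: LipDual_def)
  have "\<forall>f\<in>L0. \<bar>c * \<phi> f\<bar> \<le> (\<bar>c\<bar> * C1) * lc f"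
    using C1 by (simp add: abs_mult mult.assoc mult_left_mono)
  then show ?thesis using a unfolding LipDual_def by (auto simp: algebra_simps intro: exI[of _ "\<bar>c\<bar>*C1"])
qed

lemma LD_diff: "\<phi> \<in> LD \<Longrightarrow> \<psi> \<in> LD \<Longrightarrow> (\<lambda>f. \<phi> f - \<psi> f) \<in> LD"
  using LD_add[OF _ LD_scale[of \<psi> "-1"], of \<phi>] by simp

lemma LD_zerof: "zerof \<in> LD"
  unfolding LipDual_def zerof_def by (auto intro: exI[of _ 0])

lemma fn_add: "\<phi> \<in> LD \<Longrightarrow> \<psi> \<in> LD \<Longrightarrow> fn (\<lambda>f. \<phi> f + \<psi> f) \<le> fn \<phi> + fn \<psi>"
  by (rule fn_leI) (auto simp: fn_nonneg intro: abs_triangle_ineq[THEN order_trans] add_mono fn_le1)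

lemma fn_scale: "\<phi> \<in> LD \<Longrightarrow> fn (\<lambda>f. c * \<phi> f) \<le> \<bar>c\<bar> * fn \<phi>"
  by (rule fn_leI) (auto simp: fn_nonneg abs_mult intro: mult_left_mono fn_le1)

lemma fn_zero: "fn zerof = 0"
  using fn_leI[of 0 zerof] fn_nonneg[OF LD_zerof] by (simp add: zerof_def)

lemma fn_zero': "fn (\<lambda>f. 0) = 0"
  using fn_zero by (simp add: zerof_def)

lemma fn_eq0:
  assumes "\<phi> \<in> LD" "fn \<phi> = 0" shows "\<phi> = zerof"
proof
  fix f show "\<phi> f = zerof f"
  proof (cases "f \<in> L0")
    case True then show ?thesis using fn_bound[OF assms(1) True] assms(2) by (simp add: zerof_def)
  next
    case False then show ?thesis using LD_out[OF assms(1)] by (simp add: zerof_def)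
  qed
qed

lemma delta_app: "f \<in> L0 \<Longrightarrow> delta S d p m f = f m"
  by (simp add: delta_def)

lemma DS_iff: "\<psi> \<in> DeltaSpan S d p \<longleftrightarrow> (\<exists>(n::nat) c m. \<psi> = (\<lambda>f. \<Sum>i<n. c i * delta S d p (m i) f) \<and> (\<forall>i<n. m i \<in> S))"
  unfolding DeltaSpan_def by auto

lemma DS_LD: "\<psi> \<in> DeltaSpan S d p \<Longrightarrow> \<psi> \<in> LD"
proof -
  assume "\<psi> \<in> DeltaSpan S d p"
  then obtain n :: nat and c m where psi: "\<psi> = (\<lambda>f. \<Sum>i<n. c i * delta S d p (m i) f)" and m: "\<forall>i<n. m i \<in> S"
    using \<open>\<psi> \<in> DeltaSpan S d p\<close> unfolding DS_iff by blast
  have add: "\<psi> (\<lambda>x. f x + g x) = \<psi> f + \<psi> g" if "f \<in> L0" "g \<in> L0" for f g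
    using that L0_add[OF that] by (simp add: psi delta_app sum.distrib algebra_simps)
  have sc: "\<psi> (\<lambda>x. a * f x) = a * \<psi> f" if "f \<in> L0" for a f
    using that L0_scale[OF that] by (simp add: psi delta_app sum_distrib_left algebra_simps)
  have bd: "\<bar>\<psi> f\<bar> \<le> (\<Sum>i<n. \<bar>c i\<bar> * d (m i) p) * lc f" if f: "f \<in> L0" for f
  proof -
    have "\<psi> f = (\<Sum>i<n. c i * (f (m i) - f p))" using f by (simp add: psi delta_app Lip0_def)
    also have "\<bar>\<dots>\<bar> \<le> (\<Sum>i<n. \<bar>c i * (f (m i) - f p)\<bar>)" by (rule sum_abs)
    also have "\<dots> \<le> (\<Sum>i<n. \<bar>c i\<bar> * d (m i) p * lc f)"
    proof (rule sum_mono)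
      fix i assume "i \<in> {..<n}"
      then have "m i \<in> S" using m by auto
      then have "\<bar>f (m i) - f p\<bar> \<le> lc f * d (m i) p" using lc_bound[OF f _ pS] by auto
      then have "\<bar>c i\<bar> * \<bar>f (m i) - f p\<bar> \<le> \<bar>c i\<bar> * (lc f * d (m i) p)"
        by (rule mult_left_mono) simp
      then show "\<bar>c i * (f (m i) - f p)\<bar> \<le> \<bar>c i\<bar> * d (m i) p * lc f"
        by (simp only: abs_mult) (simp add: algebra_simps)
    qed
    also have "\<dots> = (\<Sum>i<n. \<bar>c i\<bar> * d (m i) p) * lc f" by (simp add: sum_distrib_right)
    finally show ?thesis .
  qed
  have out: "\<psi> f = 0" if "f \<notin> L0" for f using that by (simp add: psi delta_def)
  show ?thesis unfolding LipDual_def using add sc bd out by blast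
qed

lemma DS_Free: "\<psi> \<in> DeltaSpan S d p \<Longrightarrow> \<psi> \<in> Free S d p"
  unfolding Free_def using DS_LD fn_zero' by (auto intro!: bexI[of _ \<psi>])

lemma delta_DS: "m \<in> S \<Longrightarrow> delta S d p m \<in> DeltaSpan S d p"
  unfolding DeltaSpan_def
  by (rule CollectI, rule exI[of _ 1], rule exI[of _ "\<lambda>i. 1"], rule exI[of _ "\<lambda>i. m"]) auto

lemma delta_Free: "m \<in> S \<Longrightarrow> delta S d p m \<in> Free S d p"
  using DS_Free delta_DS by blast

lemma DS_add: "\<phi> \<in> DeltaSpan S d p \<Longrightarrow> \<psi> \<in> DeltaSpan S d p \<Longrightarrow> (\<lambda>f. \<phi> f + \<psi> f) \<in> DeltaSpan S d p"
proof -
  assume "\<phi> \<in> DeltaSpan S d p" "\<psi> \<in> DeltaSpan S d p"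
  then obtain n n' :: nat and c m c' m' where
    phi: "\<phi> = (\<lambda>f. \<Sum>i<n. c i * delta S d p (m i) f)" and m: "\<forall>i<n. m i \<in> S" and
    psi: "\<psi> = (\<lambda>f. \<Sum>i<n'. c' i * delta S d p (m' i) f)" and m': "\<forall>i<n'. m' i \<in> S"
    unfolding DS_iff by blast
  define C where "C = (\<lambda>i. if i < n then c i else c' (i - n))"
  define N where "N = (\<lambda>i. if i < n then m i else m' (i - n))"
  have "(\<lambda>f. \<phi> f + \<psi> f) = (\<lambda>f. \<Sum>i<n+n'. C i * delta S d p (N i) f)"
  proof
    fix f
    have "(\<Sum>i<n+n'. C i * delta S d p (N i) f) = (\<Sum>i<n. C i * delta S d p (N i) f) + (\<Sum>i<n'. C (n+i) * delta S d p (N (n+i)) f)"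
      by (simp add: sum_split_nat)
    also have "\<dots> = \<phi> f + \<psi> f" by (simp add: phi psi C_def N_def)
    finally show "\<phi> f + \<psi> f = (\<Sum>i<n+n'. C i * delta S d p (N i) f)" by simp
  qed
  moreover have "\<forall>i<n+n'. N i \<in> S" using m m' by (auto simp: N_def)
  ultimately show ?thesis unfolding DS_iff by blast
qed

lemma DS_scale: "\<phi> \<in> DeltaSpan S d p \<Longrightarrow> (\<lambda>f. a * \<phi> f) \<in> DeltaSpan S d p"
proof -
  assume "\<phi> \<in> DeltaSpan S d p"
  then obtain n :: nat and c m where
    phi: "\<phi> = (\<lambda>f. \<Sum>i<n. c i * delta S d p (m i) f)" and m: "\<forall>i<n. m i \<in> S"
    unfolding DS_iff by blast
  have "(\<lambda>f. a * \<phi> f) = (\<lambda>f. \<Sum>i<n. (a * c i) * delta S d p (m i) f)"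
    by (simp add: phi sum_distrib_left mult.assoc)
  then show ?thesis using m unfolding DS_iff by (intro exI[of _ n] exI[of _ "\<lambda>i. a * c i"] exI[of _ m]) auto
qed

lemma Free_LD: "\<phi> \<in> Free S d p \<Longrightarrow> \<phi> \<in> LD"
  by (simp add: Free_def)

lemma Free_approx: "\<phi> \<in> Free S d p \<Longrightarrow> e > 0 \<Longrightarrow> \<exists>\<psi>\<in>DeltaSpan S d p. fn (\<lambda>f. \<phi> f - \<psi> f) < e"
  by (simp add: Free_def)

lemma Free_add: "\<phi> \<in> Free S d p \<Longrightarrow> \<psi> \<in> Free S d p \<Longrightarrow> (\<lambda>f. \<phi> f + \<psi> f) \<in> Free S d p"
proof -
  assume a: "\<phi> \<in> Free S d p" "\<psi> \<in> Free S d p"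
  have "\<exists>\<xi>\<in>DeltaSpan S d p. fn (\<lambda>f. (\<phi> f + \<psi> f) - \<xi> f) < e" if e: "e > 0" for e
  proof -
    obtain a1 where a1: "a1 \<in> DeltaSpan S d p" "fn (\<lambda>f. \<phi> f - a1 f) < e/2"
      using Free_approx[OF a(1), of "e/2"] e by auto
    obtain a2 where a2: "a2 \<in> DeltaSpan S d p" "fn (\<lambda>f. \<psi> f - a2 f) < e/2"
      using Free_approx[OF a(2), of "e/2"] e by auto
    have l1: "(\<lambda>f. \<phi> f - a1 f) \<in> LD" by (rule LD_diff) (use a a1 DS_LD Free_LD in auto)
    have l2: "(\<lambda>f. \<psi> f - a2 f) \<in> LD" by (rule LD_diff) (use a a2 DS_LD Free_LD in auto)
    have "(\<lambda>f. (\<phi> f + \<psi> f) - (a1 f + a2 f)) = (\<lambda>f. (\<phi> f - a1 f) + (\<psi> f - a2 f))" by (simp add: algebra_simps)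
    then have "fn (\<lambda>f. (\<phi> f + \<psi> f) - (a1 f + a2 f)) \<le> fn (\<lambda>f. \<phi> f - a1 f) + fn (\<lambda>f. \<psi> f - a2 f)"
      using fn_add[OF l1 l2] by simp
    then show ?thesis using a1 a2 DS_add[OF a1(1) a2(1)] by (intro bexI[of _ "\<lambda>f. a1 f + a2 f"]) auto
  qed
  moreover have "(\<lambda>f. \<phi> f + \<psi> f) \<in> LD" using a by (intro LD_add) (auto simp: Free_LD)
  ultimately show ?thesis unfolding Free_def by blast
qed

lemma Free_scale: "\<phi> \<in> Free S d p \<Longrightarrow> (\<lambda>f. a * \<phi> f) \<in> Free S d p"
proof -
  assume a: "\<phi> \<in> Free S d p"
  have "\<exists>\<xi>\<in>DeltaSpan S d p. fn (\<lambda>f. a * \<phi> f - \<xi> f) < e" if e: "e > 0" for e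
  proof -
    obtain a1 where a1: "a1 \<in> DeltaSpan S d p" "fn (\<lambda>f. \<phi> f - a1 f) < e/(\<bar>a\<bar>+1)"
      using Free_approx[OF a, of "e/(\<bar>a\<bar>+1)"] e by auto
    have l1: "(\<lambda>f. \<phi> f - a1 f) \<in> LD" by (rule LD_diff) (use a a1 DS_LD Free_LD in auto)
    have "(\<lambda>f. a * \<phi> f - a * a1 f) = (\<lambda>f. a * (\<phi> f - a1 f))" by (simp add: algebra_simps)
    then have "fn (\<lambda>f. a * \<phi> f - a * a1 f) \<le> \<bar>a\<bar> * fn (\<lambda>f. \<phi> f - a1 f)"
      using fn_scale[OF l1] by simp
    also have "\<dots> \<le> \<bar>a\<bar> * (e/(\<bar>a\<bar>+1))" using a1(2) by (intro mult_left_mono) auto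
    also have "\<dots> < e" using e by (simp add: field_simps)
    finally show ?thesis using DS_scale[OF a1(1)] by (intro bexI[of _ "\<lambda>f. a * a1 f"]) auto
  qed
  moreover have "(\<lambda>f. a * \<phi> f) \<in> LD" using a by (intro LD_scale) (auto simp: Free_LD)
  ultimately show ?thesis unfolding Free_def by blast
qed

lemma Free_diff: "\<phi> \<in> Free S d p \<Longrightarrow> \<psi> \<in> Free S d p \<Longrightarrow> (\<lambda>f. \<phi> f - \<psi> f) \<in> Free S d p"
  using Free_add[OF _ Free_scale[of \<psi> "-1"], of \<phi>] by simp

end

lemma pms_M: "pms (UNIV::'a::metric_space set) dist z0"
  by unfold_locales auto

locale tsetup =
  fixes G :: "('g, 'x) monoid_scheme" and act :: "'g \<Rightarrow> 'a::metric_space \<Rightarrow> 'a" and z0 :: 'a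
    and M :: "('g \<Rightarrow> real) \<Rightarrow> real" and D :: "('g \<Rightarrow> real) set"
    and Q :: "(('a \<Rightarrow> real) \<Rightarrow> real) \<Rightarrow> (('a \<Rightarrow> real) \<Rightarrow> real)"
  assumes grp: "group G"
    and act_one: "\<And>x. act \<one>\<^bsub>G\<^esub> x = x"
    and act_mult: "\<And>g h x. g \<in> carrier G \<Longrightarrow> h \<in> carrier G \<Longrightarrow> act (g \<otimes>\<^bsub>G\<^esub> h) x = act g (act h x)"
    and act_iso: "\<And>g x y. g \<in> carrier G \<Longrightarrow> dist (act g x) (act g y) = dist x y"
    and D_cong: "\<And>F F'. F \<in> D \<Longrightarrow> (\<And>g. g \<in> carrier G \<Longrightarrow> F g = F' g) \<Longrightarrow> F' \<in> D"
    and M_cong: "\<And>F F'. F \<in> D \<Longrightarrow> F' \<in> D \<Longrightarrow> (\<And>g. g \<in> carrier G \<Longrightarrow> F g = F' g) \<Longrightarrow> M F = M F'"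
    and D_add: "\<And>F F'. F \<in> D \<Longrightarrow> F' \<in> D \<Longrightarrow> (\<lambda>g. F g + F' g) \<in> D"
    and D_scale: "\<And>F c. F \<in> D \<Longrightarrow> (\<lambda>g. c * F g) \<in> D"
    and D_const: "\<And>c. (\<lambda>g. c) \<in> D"
    and M_add: "\<And>F F'. F \<in> D \<Longrightarrow> F' \<in> D \<Longrightarrow> M (\<lambda>g. F g + F' g) = M F + M F'"
    and M_scale: "\<And>F c. F \<in> D \<Longrightarrow> M (\<lambda>g. c * F g) = c * M F"
    and M_pos: "\<And>F. F \<in> D \<Longrightarrow> (\<And>g. g \<in> carrier G \<Longrightarrow> F g \<ge> 0) \<Longrightarrow> M F \<ge> 0"
    and M_one: "M (\<lambda>g. 1) = 1"
    and M_linv: "\<And>F h. F \<in> D \<Longrightarrow> h \<in> carrier G \<Longrightarrow> M (\<lambda>g. F (h \<otimes>\<^bsub>G\<^esub> g)) = M F"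
    and M_rinv: "\<And>F h. F \<in> D \<Longrightarrow> h \<in> carrier G \<Longrightarrow> M (\<lambda>g. F (g \<otimes>\<^bsub>G\<^esub> h)) = M F"
    and D_lim: "\<And>F C. (\<And>g. g \<in> carrier G \<Longrightarrow> \<bar>F g\<bar> \<le> C) \<Longrightarrow>
                 (\<And>e. e > 0 \<Longrightarrow> \<exists>F'\<in>D. \<forall>g\<in>carrier G. \<bar>F g - F' g\<bar> \<le> e) \<Longrightarrow> F \<in> D"
    and D_act: "\<And>f C x. (\<And>a b. \<bar>f a - f b\<bar> \<le> C * dist a b) \<Longrightarrow> (\<lambda>k. f (act k x)) \<in> D"
    and Q_maps: "\<forall>\<phi>\<in>LipDual UNIV dist z0. Q \<phi> \<in> LipDual UNIV dist z0"
    and Q_lin: "lin_on (LipDual UNIV dist z0) Q"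
    and Q_bdd: "\<exists>C. \<forall>\<phi>\<in>LipDual UNIV dist z0.
                  fnorm UNIV dist z0 (Q \<phi>) \<le> C * fnorm UNIV dist z0 \<phi>"
    and Q_proj: "\<forall>\<phi>\<in>LipDual UNIV dist z0. Q (Q \<phi>) = Q \<phi>"
    and Q_range: "Q ` LipDual UNIV dist z0 = Free UNIV dist z0"
    and Q_ker: "\<forall>g\<in>carrier G. \<forall>\<phi>\<in>LipDual UNIV dist z0.
                  Q \<phi> = zerof \<longrightarrow> Q (Tgdd act z0 g \<phi>) = zerof"
begin

interpretation Mz: pms "UNIV::'a set" dist z0 by (rule pms_M)

abbreviation "K \<equiv> carrier G"
abbreviation "LM \<equiv> Lip0 (UNIV::'a set) dist z0"
abbreviation "LDM \<equiv> LipDual (UNIV::'a set) dist z0"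
abbreviation "FM \<equiv> Free (UNIV::'a set) dist z0"
abbreviation "DSM \<equiv> DeltaSpan (UNIV::'a set) dist z0"
abbreviation "lcM \<equiv> lipconst (UNIV::'a set) dist"
abbreviation "fnM \<equiv> fnorm (UNIV::'a set) dist z0"
abbreviation "dM \<equiv> delta (UNIV::'a set) dist z0"

lemma D_diff: "F \<in> D \<Longrightarrow> F' \<in> D \<Longrightarrow> (\<lambda>g. F g - F' g) \<in> D"
  using D_add[OF _ D_scale[of F' "-1"], of F] by simp

lemma M_diff: "F \<in> D \<Longrightarrow> F' \<in> D \<Longrightarrow> M (\<lambda>g. F g - F' g) = M F - M F'"
  using M_add[OF _ D_scale[of F' "-1"], of F] M_scale[of F' "-1"] by simp

lemma M_const: "M (\<lambda>g. c) = c"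
proof -
  have "M (\<lambda>g. c * (\<lambda>g. 1) g) = c * M (\<lambda>g. 1)" by (rule M_scale[OF D_const])
  then show ?thesis using M_one by simp
qed

lemma M_bound:
  assumes F: "F \<in> D" and b: "\<And>g. g \<in> K \<Longrightarrow> \<bar>F g\<bar> \<le> C"
  shows "\<bar>M F\<bar> \<le> C"
proof -
  have "M (\<lambda>g. C - F g) \<ge> 0" by (rule M_pos) (use D_diff[OF D_const F] b in \<open>auto simp: abs_le_iff\<close>)
  moreover have "M (\<lambda>g. C + F g) \<ge> 0" by (rule M_pos) (use D_add[OF D_const F] b in \<open>force simp: abs_le_iff\<close>)+
  moreover have "M (\<lambda>g. C - F g) = C - M F" using M_diff[OF D_const F] M_const by simp
  moreover have "M (\<lambda>g. C + F g) = C + M F" using M_add[OF D_const F] M_const by simp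
  ultimately show ?thesis by linarith
qed

lemma D_sum: "(\<And>i. i < (n::nat) \<Longrightarrow> A i \<in> D) \<Longrightarrow> (\<lambda>g. \<Sum>i<n. A i g) \<in> D"
proof (induct n arbitrary: A)
  case 0 then show ?case using D_const[of 0] by simp
next
  case (Suc n) then show ?case using D_add[of "\<lambda>g. \<Sum>i<n. A i g" "A n"] by simp
qed

lemma M_sum: "(\<And>i. i < (n::nat) \<Longrightarrow> A i \<in> D) \<Longrightarrow> M (\<lambda>g. \<Sum>i<n. A i g) = (\<Sum>i<n. M (A i))"
proof (induct n arbitrary: A)
  case 0 then show ?case using M_const[of 0] by simp
next
  case (Suc n)
  have "M (\<lambda>g. \<Sum>i<Suc n. A i g) = M (\<lambda>g. (\<Sum>i<n. A i g) + A n g)" by simp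
  also have "\<dots> = M (\<lambda>g. \<Sum>i<n. A i g) + M (A n)"
    using M_add[OF D_sum[of n A] , of "A n"] Suc.prems by simp
  finally show ?case using Suc by simp
qed

lemma one_K: "\<one>\<^bsub>G\<^esub> \<in> K" by (rule monoid.one_closed[OF group.is_monoid[OF grp]])

lemma mult_K: "g \<in> K \<Longrightarrow> h \<in> K \<Longrightarrow> g \<otimes>\<^bsub>G\<^esub> h \<in> K"
  by (rule monoid.m_closed[OF group.is_monoid[OF grp]])

subsection \<open>The dual operators T_g\<close>

definition Tstar :: "'g \<Rightarrow> ('a \<Rightarrow> real) \<Rightarrow> ('a \<Rightarrow> real)" where
  "Tstar g f = (\<lambda>m. f (act g m) - f (act g z0))"

lemma Tstar_L0:
  assumes g: "g \<in> K" and f: "f \<in> LM"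
  shows "Tstar g f \<in> LM" "lcM (Tstar g f) \<le> lcM f"
proof -
  have b: "\<bar>Tstar g f x - Tstar g f y\<bar> \<le> lcM f * dist x y" for x y
    using Mz.lc_bound[OF f, of "act g x" "act g y"] act_iso[OF g] by (simp add: Tstar_def)
  then show "Tstar g f \<in> LM" by (auto simp: Lip0_def Tstar_def)
  show "lcM (Tstar g f) \<le> lcM f" by (rule Mz.lc_le) (use b Mz.lc_nonneg[OF f] in auto)
qed

lemma Tgdd_app: "f \<in> LM \<Longrightarrow> Tgdd act z0 g \<phi> f = \<phi> (Tstar g f)"
  by (simp add: Tgdd_def Tstar_def)

lemma Tgdd_out: "f \<notin> LM \<Longrightarrow> Tgdd act z0 g \<phi> f = 0"
  by (simp add: Tgdd_def)

lemma Tstar_add: "Tstar g (\<lambda>x. f x + f' x) = (\<lambda>x. Tstar g f x + Tstar g f' x)"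
  by (auto simp: Tstar_def)

lemma Tstar_scale: "Tstar g (\<lambda>x. c * f x) = (\<lambda>x. c * Tstar g f x)"
  by (auto simp: Tstar_def algebra_simps)

lemma Tgdd_bound:
  assumes g: "g \<in> K" and phi: "\<phi> \<in> LDM" and f: "f \<in> LM"
  shows "\<bar>Tgdd act z0 g \<phi> f\<bar> \<le> fnM \<phi> * lcM f"
proof -
  have "\<bar>Tgdd act z0 g \<phi> f\<bar> = \<bar>\<phi> (Tstar g f)\<bar>" using f by (simp add: Tgdd_app)
  also have "\<dots> \<le> fnM \<phi> * lcM (Tstar g f)" by (rule Mz.fn_bound[OF phi Tstar_L0(1)[OF g f]])
  also have "\<dots> \<le> fnM \<phi> * lcM f" by (rule mult_left_mono[OF Tstar_L0(2)[OF g f] Mz.fn_nonneg[OF phi]])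
  finally show ?thesis .
qed

lemma Tgdd_LD:
  assumes g: "g \<in> K" and phi: "\<phi> \<in> LDM"
  shows "Tgdd act z0 g \<phi> \<in> LDM" "fnM (Tgdd act z0 g \<phi>) \<le> fnM \<phi>"
proof -
  have add: "Tgdd act z0 g \<phi> (\<lambda>x. f x + f' x) = Tgdd act z0 g \<phi> f + Tgdd act z0 g \<phi> f'"
    if "f \<in> LM" "f' \<in> LM" for f f'
    using that Mz.L0_add[OF that] Tstar_L0[OF g] Mz.LD_add_app[OF phi]
    by (simp add: Tgdd_app Tstar_add)
  have sc: "Tgdd act z0 g \<phi> (\<lambda>x. c * f x) = c * Tgdd act z0 g \<phi> f" if "f \<in> LM" for f c
    using that Mz.L0_scale[OF that] Tstar_L0[OF g] Mz.LD_scale_app[OF phi]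
    by (simp add: Tgdd_app Tstar_scale)
  have bd: "\<forall>f\<in>LM. \<bar>Tgdd act z0 g \<phi> f\<bar> \<le> fnM \<phi> * lcM f" using Tgdd_bound[OF g phi] by blast
  show "Tgdd act z0 g \<phi> \<in> LDM"
    unfolding LipDual_def mem_Collect_eq
  proof (intro conjI)
    show "\<exists>C. \<forall>f\<in>LM. \<bar>Tgdd act z0 g \<phi> f\<bar> \<le> C * lcM f" using bd by (rule exI)
  qed (use add sc Tgdd_out in auto)
  show "fnM (Tgdd act z0 g \<phi>) \<le> fnM \<phi>"
  proof (rule Mz.fn_leI)
    show "0 \<le> fnM \<phi>" by (rule Mz.fn_nonneg[OF phi])
    fix f assume f: "f \<in> LM" "lcM f \<le> 1"
    have "fnM \<phi> * lcM f \<le> fnM \<phi>" using f(2) Mz.fn_nonneg[OF phi] by (simp add: mult_left_le)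
    then show "\<bar>Tgdd act z0 g \<phi> f\<bar> \<le> fnM \<phi>" using Tgdd_bound[OF g phi f(1)] by linarith
  qed
qed

lemma Tgdd_diff: "Tgdd act z0 g (\<lambda>f. \<phi> f - \<psi> f) = (\<lambda>f. Tgdd act z0 g \<phi> f - Tgdd act z0 g \<psi> f)"
  by (auto simp: Tgdd_def)

lemma Tgdd_DS_formula:
  assumes g: "g \<in> K" and f: "f \<in> LM"
  shows "Tgdd act z0 g (\<lambda>f. \<Sum>i<n. c i * dM (m i) f) f = (\<Sum>i<n. c i * (f (act g (m i)) - f (act g z0)))"
  using f Tstar_L0[OF g f] by (simp add: Tgdd_app Mz.delta_app Tstar_def)

lemma Tgdd_DS:
  assumes g: "g \<in> K" and psi: "\<psi> \<in> DSM"
  shows "Tgdd act z0 g \<psi> \<in> DSM"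
proof -
  obtain n :: nat and c m where psi_eq: "\<psi> = (\<lambda>f. \<Sum>i<n. c i * dM (m i) f)"
    using psi unfolding Mz.DS_iff by blast
  define C where "C = (\<lambda>i. if i < n then c i else - (\<Sum>j<n. c j))"
  define N where "N = (\<lambda>i. if i < n then act g (m i) else act g z0)"
  have "Tgdd act z0 g \<psi> = (\<lambda>f. \<Sum>i<Suc n. C i * dM (N i) f)"
  proof
    fix f show "Tgdd act z0 g \<psi> f = (\<Sum>i<Suc n. C i * dM (N i) f)"
    proof (cases "f \<in> LM")
      case True
      have s1: "(\<Sum>i<n. C i * dM (N i) f) = (\<Sum>i<n. c i * f (act g (m i)))"
        by (rule sum.cong) (auto simp: C_def N_def Mz.delta_app[OF True])
      have s2: "C n * dM (N n) f = - (\<Sum>j<n. c j) * f (act g z0)"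
        by (simp add: C_def N_def Mz.delta_app[OF True])
      have s3: "(\<Sum>i<n. c i * (f (act g (m i)) - f (act g z0))) = (\<Sum>i<n. c i * f (act g (m i))) - (\<Sum>j<n. c j) * f (act g z0)"
        by (simp add: right_diff_distrib sum_subtractf sum_distrib_right)
      show ?thesis unfolding psi_eq Tgdd_DS_formula[OF g True] sum.lessThan_Suc s1 s2 s3 by simp
    next
      case False then show ?thesis by (simp add: Tgdd_out delta_def)
    qed
  qed
  then show ?thesis unfolding Mz.DS_iff by (intro exI[of _ "Suc n"] exI[of _ C] exI[of _ N]) simp
qed

lemma Tgdd_Free:
  assumes g: "g \<in> K" and mu: "\<mu> \<in> FM"
  shows "Tgdd act z0 g \<mu> \<in> FM"
proof -
  have "\<exists>\<psi>\<in>DSM. fnM (\<lambda>f. Tgdd act z0 g \<mu> f - \<psi> f) < e" if e: "e > 0" for e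
  proof -
    obtain \<psi> where psi: "\<psi> \<in> DSM" "fnM (\<lambda>f. \<mu> f - \<psi> f) < e" using Mz.Free_approx[OF mu e] by blast
    have l: "(\<lambda>f. \<mu> f - \<psi> f) \<in> LDM" using Mz.LD_diff Mz.Free_LD[OF mu] Mz.DS_LD[OF psi(1)] by blast
    have "fnM (\<lambda>f. Tgdd act z0 g \<mu> f - Tgdd act z0 g \<psi> f) \<le> fnM (\<lambda>f. \<mu> f - \<psi> f)"
      using Tgdd_LD(2)[OF g l] by (simp add: Tgdd_diff)
    then show ?thesis using psi Tgdd_DS[OF g psi(1)] by (intro bexI[of _ "Tgdd act z0 g \<psi>"]) auto
  qed
  then show ?thesis using Tgdd_LD(1)[OF g Mz.Free_LD[OF mu]] by (simp add: Free_def)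
qed

end

context tsetup
begin

interpretation Mz: pms "UNIV::'a set" dist z0 by (rule pms_M)

lemma u_D: "f \<in> LM \<Longrightarrow> (\<lambda>k. f (act k x)) \<in> D"
  by (rule D_act[of f "lcM f"]) (use Mz.lc_bound in auto)

lemma u_D': assumes f: "f \<in> LM" and g: "g \<in> K" shows "(\<lambda>k. f (act g (act k x))) \<in> D"
proof (rule D_act[of "\<lambda>y. f (act g y)" "lcM f"])
  fix a b show "\<bar>f (act g a) - f (act g b)\<bar> \<le> lcM f * dist a b"
    using Mz.lc_bound[OF f UNIV_I UNIV_I, of "act g a" "act g b"] act_iso[OF g, of a b] by simp
qed

lemma F_DS: assumes psi: "\<psi> \<in> DSM" shows "(\<lambda>g. Tgdd act z0 g \<psi> f) \<in> D"
proof (cases "f \<in> LM")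
  case True
  obtain n :: nat and c m where psi_eq: "\<psi> = (\<lambda>f. \<Sum>i<n. c i * dM (m i) f)"
    using psi unfolding Mz.DS_iff by blast
  have "(\<lambda>g. \<Sum>i<n. c i * (f (act g (m i)) - f (act g z0))) \<in> D"
    by (rule D_sum, rule D_scale, rule D_diff) (use u_D[OF True] in auto)
  then show ?thesis
    by (rule D_cong) (simp add: psi_eq Tgdd_DS_formula[OF _ True])
next
  case False
  show ?thesis by (rule D_cong[OF D_const[of 0]]) (simp add: Tgdd_out[OF False])
qed

lemma F_Free: assumes mu: "\<mu> \<in> FM" shows "(\<lambda>g. Tgdd act z0 g \<mu> f) \<in> D"
proof (cases "f \<in> LM")
  case True
  show ?thesis
  proof (rule D_lim)
    fix g assume "g \<in> K"
    then show "\<bar>Tgdd act z0 g \<mu> f\<bar> \<le> fnM \<mu> * lcM f" by (rule Tgdd_bound[OF _ Mz.Free_LD[OF mu] True])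
  next
    fix e :: real assume e: "e > 0"
    have ep: "e / (lcM f + 1) > 0" using e Mz.lc_nonneg[OF True] by simp
    obtain \<psi> where psi: "\<psi> \<in> DSM" "fnM (\<lambda>f. \<mu> f - \<psi> f) < e / (lcM f + 1)"
      using Mz.Free_approx[OF mu ep] by blast
    have l: "(\<lambda>f. \<mu> f - \<psi> f) \<in> LDM" using Mz.LD_diff Mz.Free_LD[OF mu] Mz.DS_LD[OF psi(1)] by blast
    have "\<bar>Tgdd act z0 g \<mu> f - Tgdd act z0 g \<psi> f\<bar> \<le> e" if g: "g \<in> K" for g
    proof -
      have "\<bar>Tgdd act z0 g \<mu> f - Tgdd act z0 g \<psi> f\<bar> = \<bar>Tgdd act z0 g (\<lambda>f. \<mu> f - \<psi> f) f\<bar>"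
        by (simp add: Tgdd_diff)
      also have "\<dots> \<le> fnM (\<lambda>f. \<mu> f - \<psi> f) * lcM f" by (rule Tgdd_bound[OF g l True])
      also have "\<dots> \<le> e / (lcM f + 1) * lcM f"
        using psi(2) Mz.lc_nonneg[OF True] by (intro mult_right_mono) auto
      also have "\<dots> \<le> e" using e Mz.lc_nonneg[OF True] by (simp add: field_simps)
      finally show ?thesis .
    qed
    then show "\<exists>F'\<in>D. \<forall>g\<in>K. \<bar>Tgdd act z0 g \<mu> f - F' g\<bar> \<le> e"
      by (intro bexI[of _ "\<lambda>g. Tgdd act z0 g \<psi> f"] ballI F_DS[OF psi(1)])
  qed
next
  case False
  show ?thesis by (rule D_cong[OF D_const[of 0]]) (simp add: Tgdd_out[OF False])
qed

subsection \<open>Averaging\<close>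

definition fbar :: "('a \<Rightarrow> real) \<Rightarrow> 'a \<Rightarrow> real" where
  "fbar f x = M (\<lambda>k. f (act k x)) - M (\<lambda>k. f (act k z0))"

lemma fbar_bound:
  assumes f: "f \<in> LM" shows "\<bar>fbar f x - fbar f y\<bar> \<le> lcM f * dist x y"
proof -
  have "fbar f x - fbar f y = M (\<lambda>k. f (act k x) - f (act k y))"
    using M_diff[OF u_D[OF f] u_D[OF f]] by (simp add: fbar_def)
  also have "\<bar>\<dots>\<bar> \<le> lcM f * dist x y"
  proof (rule M_bound[OF D_diff[OF u_D[OF f] u_D[OF f]]])
    fix k assume k: "k \<in> K"
    show "\<bar>f (act k x) - f (act k y)\<bar> \<le> lcM f * dist x y"
      using Mz.lc_bound[OF f UNIV_I UNIV_I, of "act k x" "act k y"] act_iso[OF k, of x y] by simp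
  qed
  finally show ?thesis .
qed

lemma fbar_LM: assumes f: "f \<in> LM" shows "fbar f \<in> LM" "lcM (fbar f) \<le> lcM f"
proof -
  show "fbar f \<in> LM" using fbar_bound[OF f] by (auto simp: Lip0_def fbar_def)
  show "lcM (fbar f) \<le> lcM f" by (rule Mz.lc_le) (use fbar_bound[OF f] Mz.lc_nonneg[OF f] in auto)
qed

lemma fbar_inv: assumes f: "f \<in> LM" and k: "k \<in> K" shows "fbar f (act k x) = fbar f x"
proof -
  have "M (\<lambda>g. f (act g (act k x))) = M (\<lambda>g. (\<lambda>g. f (act g x)) (g \<otimes>\<^bsub>G\<^esub> k))"
  proof (rule M_cong)
    show "(\<lambda>g. f (act g (act k x))) \<in> D" by (rule u_D[OF f])
    show "\<And>g. g \<in> K \<Longrightarrow> f (act g (act k x)) = f (act (g \<otimes>\<^bsub>G\<^esub> k) x)"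
      using act_mult k by simp
    show "(\<lambda>g. f (act (g \<otimes>\<^bsub>G\<^esub> k) x)) \<in> D" by (rule D_cong[OF u_D[OF f, of "act k x"]]) (use act_mult k in simp)
  qed
  also have "\<dots> = M (\<lambda>g. f (act g x))" by (rule M_rinv[OF u_D[OF f] k])
  finally show ?thesis by (simp add: fbar_def)
qed

lemma orb_self: "x \<in> orbcl G act x"
proof -
  have "act \<one>\<^bsub>G\<^esub> x \<in> (\<lambda>g. act g x) ` K" by (rule imageI[OF one_K])
  then have "x \<in> (\<lambda>g. act g x) ` K" by (simp add: act_one)
  then show ?thesis unfolding orbcl_def by (rule closure_subset[THEN subsetD])
qed

lemma fbar_orb: assumes f: "f \<in> LM" and a: "a \<in> orbcl G act x" shows "fbar f a = fbar f x"
proof (rule ccontr)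
  assume ne: "fbar f a \<noteq> fbar f x"
  define \<delta> where "\<delta> = \<bar>fbar f a - fbar f x\<bar>"
  have dp: "\<delta> > 0" using ne by (simp add: \<delta>_def)
  have L: "lcM f \<ge> 0" by (rule Mz.lc_nonneg[OF f])
  have ep: "\<delta> / (lcM f + 1) > 0" using dp L by simp
  from a have "\<forall>e>0. \<exists>y\<in>(\<lambda>g. act g x) ` K. dist y a < e" unfolding orbcl_def closure_approachable .
  then obtain y where y: "y \<in> (\<lambda>g. act g x) ` K" "dist y a < \<delta> / (lcM f + 1)"
    using ep by (meson)
  from y(1) obtain k where k: "k \<in> K" "y = act k x" by (rule imageE) simp
  have "\<delta> = \<bar>fbar f a - fbar f y\<bar>" using fbar_inv[OF f k(1)] k(2) by (simp add: \<delta>_def)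
  also have "\<dots> \<le> lcM f * dist a y" by (rule fbar_bound[OF f])
  also have "\<dots> \<le> lcM f * (\<delta> / (lcM f + 1))" using y(2) L by (intro mult_left_mono) (auto simp: dist_commute)
  also have "\<dots> < \<delta>" using dp L by (simp add: field_simps)
  finally show False by simp
qed

lemma fbar_G: assumes f: "f \<in> Lip0G G act z0" shows "fbar f = f"
proof
  fix x
  have fL: "f \<in> LM" and inv: "\<And>g x. g \<in> K \<Longrightarrow> f (act g x) = f x" using f by (auto simp: Lip0G_def)
  have "M (\<lambda>k. f (act k x)) = M (\<lambda>k. f x)" by (rule M_cong[OF u_D[OF fL] D_const]) (simp add: inv)
  moreover have "M (\<lambda>k. f (act k z0)) = M (\<lambda>k. f z0)" by (rule M_cong[OF u_D[OF fL] D_const]) (simp add: inv)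
  moreover have "f z0 = 0" using fL by (simp add: Lip0_def)
  ultimately show "fbar f x = f x" by (simp add: fbar_def M_const)
qed

lemma fbar_add: assumes f: "f \<in> LM" and g: "g \<in> LM"
  shows "fbar (\<lambda>x. f x + g x) = (\<lambda>x. fbar f x + fbar g x)"
proof
  fix x
  show "fbar (\<lambda>x. f x + g x) x = fbar f x + fbar g x"
    using M_add[OF u_D[OF f] u_D[OF g], of x] M_add[OF u_D[OF f] u_D[OF g], of z0]
    by (simp add: fbar_def)
qed

lemma fbar_scale: assumes f: "f \<in> LM"
  shows "fbar (\<lambda>x. c * f x) = (\<lambda>x. c * fbar f x)"
proof
  fix x
  show "fbar (\<lambda>x. c * f x) x = c * fbar f x"
    using M_scale[OF u_D[OF f], of c x] M_scale[OF u_D[OF f], of c z0]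
    by (simp add: fbar_def right_diff_distrib)
qed

lemma fbar_Tstar: assumes g: "g \<in> K" and f: "f \<in> LM" shows "fbar (Tstar g f) = fbar f"
proof
  fix x
  have e1: "M (\<lambda>k. f (act g (act k y))) = M (\<lambda>k. f (act k y))" for y
  proof -
    have "M (\<lambda>k. f (act g (act k y))) = M (\<lambda>k. (\<lambda>k. f (act k y)) (g \<otimes>\<^bsub>G\<^esub> k))"
    proof (rule M_cong)
      show "(\<lambda>k. f (act g (act k y))) \<in> D" by (rule u_D'[OF f g])
      show "\<And>k. k \<in> K \<Longrightarrow> f (act g (act k y)) = f (act (g \<otimes>\<^bsub>G\<^esub> k) y)"
        using act_mult g by simp
      show "(\<lambda>k. f (act (g \<otimes>\<^bsub>G\<^esub> k) y)) \<in> D" by (rule D_cong[OF u_D'[OF f g, of y]]) (use act_mult g in simp)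
    qed
    also have "\<dots> = M (\<lambda>k. f (act k y))" by (rule M_linv[OF u_D[OF f] g])
    finally show ?thesis .
  qed
  have e2: "M (\<lambda>k. Tstar g f (act k y)) = M (\<lambda>k. f (act g (act k y))) - f (act g z0)" for y
    using M_diff[OF u_D'[OF f g] D_const, of y "f (act g z0)"] M_const by (simp add: Tstar_def)
  show "fbar (Tstar g f) x = fbar f x" using e1 e2 by (simp add: fbar_def)
qed

end

context tsetup
begin

interpretation Mz: pms "UNIV::'a set" dist z0 by (rule pms_M)

abbreviation "orb \<equiv> orbcl G act"
abbreviation "QS \<equiv> quot_space G act"
abbreviation "q0 \<equiv> orbcl G act z0"
abbreviation "LQ \<equiv> Lip0 QS quot_dist q0"
abbreviation "LDQ \<equiv> LipDual QS quot_dist q0"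
abbreviation "FQ \<equiv> Free QS quot_dist q0"
abbreviation "DSQ \<equiv> DeltaSpan QS quot_dist q0"
abbreviation "lcQ \<equiv> lipconst QS quot_dist"
abbreviation "fnQ \<equiv> fnorm QS quot_dist q0"
abbreviation "dQ \<equiv> delta QS quot_dist q0"

lemma orb_QS: "orb x \<in> QS" by (simp add: quot_space_def)

lemma QS_E: "A \<in> QS \<Longrightarrow> A = orb (SOME x. A = orb x)"
  unfolding quot_space_def by (rule someI_ex) auto

lemma qd_bdd: "bdd_below {dist x y | x y. x \<in> A \<and> y \<in> B}"
  by (rule bdd_belowI[of _ 0]) auto

lemma qd_le: "a \<in> A \<Longrightarrow> b \<in> B \<Longrightarrow> quot_dist A B \<le> dist a b"
  unfolding quot_dist_def by (rule cInf_lower[OF _ qd_bdd]) auto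

lemma qd_ge: assumes "a0 \<in> A" "b0 \<in> B" "\<And>a b. a \<in> A \<Longrightarrow> b \<in> B \<Longrightarrow> c \<le> dist a b"
  shows "c \<le> quot_dist A B"
  unfolding quot_dist_def by (rule cInf_greatest) (use assms in auto)

lemma QS_ne: "A \<in> QS \<Longrightarrow> \<exists>a. a \<in> A"
  using orb_self unfolding quot_space_def by auto

lemma pms_Q: "pms QS quot_dist q0"
proof
  fix A B assume "A \<in> QS" "B \<in> QS"
  then obtain a b where "a \<in> A" "b \<in> B" using QS_ne by blast
  then show "0 \<le> quot_dist A B" by (rule qd_ge) simp
qed (rule orb_QS)

interpretation Qz: pms QS quot_dist q0 by (rule pms_Q)

definition hf :: "('a \<Rightarrow> real) \<Rightarrow> 'a set \<Rightarrow> real" where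
  "hf f = (\<lambda>A. if A \<in> QS then fbar f (SOME x. A = orb x) else 0)"

lemma orb_eq_mem: "orb x = orb y \<Longrightarrow> x \<in> orb y"
  using orb_self by metis

lemma hf_orb: assumes f: "f \<in> LM" shows "hf f (orb x) = fbar f x"
proof -
  define y where "y = (SOME y. orb x = orb y)"
  have "orb x = orb y" unfolding y_def by (rule someI[of _ x]) simp
  then have "x \<in> orb y" by (rule orb_eq_mem)
  then have "fbar f x = fbar f y" by (rule fbar_orb[OF f])
  then show ?thesis by (simp add: hf_def orb_QS y_def)
qed

lemma hf_lip: assumes f: "f \<in> LM" and A: "A \<in> QS" and B: "B \<in> QS"
  shows "\<bar>hf f A - hf f B\<bar> \<le> lcM f * quot_dist A B"
proof -
  obtain x y where xy: "A = orb x" "B = orb y" using A B unfolding quot_space_def by blast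
  have key: "\<bar>fbar f x - fbar f y\<bar> \<le> lcM f * dist a b" if "a \<in> A" "b \<in> B" for a b
    using fbar_bound[OF f, of a b] fbar_orb[OF f, of a x] fbar_orb[OF f, of b y] that xy by simp
  have L: "lcM f \<ge> 0" by (rule Mz.lc_nonneg[OF f])
  have "\<bar>fbar f x - fbar f y\<bar> \<le> lcM f * quot_dist A B"
  proof (cases "lcM f = 0")
    case True
    have "x \<in> A" "y \<in> B" using xy orb_self by auto
    then show ?thesis using key[of x y] True by simp
  next
    case False
    then have Lp: "lcM f > 0" using L by simp
    have "\<bar>fbar f x - fbar f y\<bar> / lcM f \<le> quot_dist A B"
    proof (rule qd_ge)
      show "x \<in> A" "y \<in> B" using xy orb_self by auto
      fix a b assume "a \<in> A" "b \<in> B"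
      then show "\<bar>fbar f x - fbar f y\<bar> / lcM f \<le> dist a b"
        using key Lp by (simp add: divide_le_eq mult.commute)
    qed
    then show ?thesis using Lp by (simp add: divide_le_eq mult.commute)
  qed
  then show ?thesis using xy hf_orb[OF f] by simp
qed

lemma hf_LQ: assumes f: "f \<in> LM" shows "hf f \<in> LQ" "lcQ (hf f) \<le> lcM f"
proof -
  have "hf f q0 = 0" using hf_orb[OF f, of z0] by (simp add: fbar_def)
  then show "hf f \<in> LQ" unfolding Lip0_def using hf_lip[OF f] by (auto simp: hf_def)
  show "lcQ (hf f) \<le> lcM f" by (rule Qz.lc_le) (use Mz.lc_nonneg[OF f] hf_lip[OF f] in auto)
qed

lemma Psi_hf: assumes f: "f \<in> LM" shows "Psi G act (hf f) = fbar f"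
  by (rule ext) (simp add: Psi_def hf_orb[OF f])

lemma hf_add: assumes f: "f \<in> LM" and g: "g \<in> LM"
  shows "hf (\<lambda>x. f x + g x) = (\<lambda>A. hf f A + hf g A)"
  by (rule ext) (simp add: hf_def fbar_add[OF f g])

lemma hf_scale: assumes f: "f \<in> LM"
  shows "hf (\<lambda>x. c * f x) = (\<lambda>A. c * hf f A)"
  by (rule ext) (simp add: hf_def fbar_scale[OF f])

lemma hf_Tstar: assumes g: "g \<in> K" and f: "f \<in> LM" shows "hf (Tstar g f) = hf f"
  by (rule ext) (simp add: hf_def fbar_Tstar[OF g f])

lemma Psi_LM: assumes h: "h \<in> LQ" shows "Psi G act h \<in> LM" "lcM (Psi G act h) \<le> lcQ h"
proof -
  have b: "\<bar>Psi G act h x - Psi G act h y\<bar> \<le> lcQ h * dist x y" for x y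
  proof -
    have "\<bar>Psi G act h x - Psi G act h y\<bar> \<le> lcQ h * quot_dist (orb x) (orb y)"
      unfolding Psi_def by (rule Qz.lc_bound[OF h orb_QS orb_QS])
    also have "\<dots> \<le> lcQ h * dist x y"
      by (rule mult_left_mono[OF qd_le[OF orb_self orb_self] Qz.lc_nonneg[OF h]])
    finally show ?thesis .
  qed
  have "h q0 = 0" using h by (simp add: Lip0_def)
  then show "Psi G act h \<in> LM" using b by (auto simp: Lip0_def Psi_def)
  show "lcM (Psi G act h) \<le> lcQ h" by (rule Mz.lc_le) (use b Qz.lc_nonneg[OF h] in auto)
qed

lemma Psi_add: "Psi G act (\<lambda>A. h A + h' A) = (\<lambda>x. Psi G act h x + Psi G act h' x)"
  by (simp add: Psi_def)

lemma Psi_scale: "Psi G act (\<lambda>A. c * h A) = (\<lambda>x. c * Psi G act h x)"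
  by (simp add: Psi_def)

definition Phi :: "(('a set \<Rightarrow> real) \<Rightarrow> real) \<Rightarrow> (('a \<Rightarrow> real) \<Rightarrow> real)" where
  "Phi \<nu> = (\<lambda>f. if f \<in> LM then \<nu> (hf f) else 0)"

lemma Phi_LD: assumes nu: "\<nu> \<in> LDQ" shows "Phi \<nu> \<in> LDM" "fnM (Phi \<nu>) \<le> fnQ \<nu>"
proof -
  have bd: "\<bar>Phi \<nu> f\<bar> \<le> fnQ \<nu> * lcM f" if f: "f \<in> LM" for f
  proof -
    have "\<bar>Phi \<nu> f\<bar> = \<bar>\<nu> (hf f)\<bar>" using f by (simp add: Phi_def)
    also have "\<dots> \<le> fnQ \<nu> * lcQ (hf f)" by (rule Qz.fn_bound[OF nu hf_LQ(1)[OF f]])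
    also have "\<dots> \<le> fnQ \<nu> * lcM f" by (rule mult_left_mono[OF hf_LQ(2)[OF f] Qz.fn_nonneg[OF nu]])
    finally show ?thesis .
  qed
  have add: "Phi \<nu> (\<lambda>x. f x + g x) = Phi \<nu> f + Phi \<nu> g" if "f \<in> LM" "g \<in> LM" for f g
    using that Mz.L0_add[OF that] hf_add[OF that] Qz.LD_add_app[OF nu hf_LQ(1) hf_LQ(1)]
    by (simp add: Phi_def)
  have sc: "Phi \<nu> (\<lambda>x. c * f x) = c * Phi \<nu> f" if "f \<in> LM" for f c
    using that Mz.L0_scale[OF that] hf_scale[OF that] Qz.LD_scale_app[OF nu hf_LQ(1)]
    by (simp add: Phi_def)
  have bd': "\<forall>f\<in>LM. \<bar>Phi \<nu> f\<bar> \<le> fnQ \<nu> * lcM f" using bd by blast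
  show "Phi \<nu> \<in> LDM"
    unfolding LipDual_def mem_Collect_eq
  proof (intro conjI)
    show "\<exists>C. \<forall>f\<in>LM. \<bar>Phi \<nu> f\<bar> \<le> C * lcM f" using bd' by (rule exI)
  qed (use add sc in \<open>auto simp: Phi_def\<close>)
  show "fnM (Phi \<nu>) \<le> fnQ \<nu>"
  proof (rule Mz.fn_leI)
    show "0 \<le> fnQ \<nu>" by (rule Qz.fn_nonneg[OF nu])
    fix f assume f: "f \<in> LM" "lcM f \<le> 1"
    have "fnQ \<nu> * lcM f \<le> fnQ \<nu>" using f(2) Qz.fn_nonneg[OF nu] by (simp add: mult_left_le)
    then show "\<bar>Phi \<nu> f\<bar> \<le> fnQ \<nu>" using bd[OF f(1)] by linarith
  qed
qed

lemma Phi_add: "Phi (\<lambda>h. \<nu> h + \<nu>' h) = (\<lambda>f. Phi \<nu> f + Phi \<nu>' f)"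
  by (rule ext) (simp add: Phi_def)

lemma Phi_scale: "Phi (\<lambda>h. c * \<nu> h) = (\<lambda>f. c * Phi \<nu> f)"
  by (rule ext) (simp add: Phi_def)

lemma Phi_inv: assumes g: "g \<in> K" shows "Tgdd act z0 g (Phi \<nu>) = Phi \<nu>"
proof
  fix f show "Tgdd act z0 g (Phi \<nu>) f = Phi \<nu> f"
  proof (cases "f \<in> LM")
    case True
    then show ?thesis using Tstar_L0(1)[OF g True] hf_Tstar[OF g True] by (simp add: Tgdd_app Phi_def)
  next
    case False then show ?thesis by (simp add: Tgdd_out Phi_def)
  qed
qed

definition Sop :: "(('a \<Rightarrow> real) \<Rightarrow> real) \<Rightarrow> (('a set \<Rightarrow> real) \<Rightarrow> real)" where
  "Sop \<mu> = (\<lambda>h. if h \<in> LQ then \<mu> (Psi G act h) else 0)"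

lemma Sop_LD: assumes mu: "\<mu> \<in> LDM" shows "Sop \<mu> \<in> LDQ" "fnQ (Sop \<mu>) \<le> fnM \<mu>"
proof -
  have bd: "\<bar>Sop \<mu> h\<bar> \<le> fnM \<mu> * lcQ h" if h: "h \<in> LQ" for h
  proof -
    have "\<bar>Sop \<mu> h\<bar> = \<bar>\<mu> (Psi G act h)\<bar>" using h by (simp add: Sop_def)
    also have "\<dots> \<le> fnM \<mu> * lcM (Psi G act h)" by (rule Mz.fn_bound[OF mu Psi_LM(1)[OF h]])
    also have "\<dots> \<le> fnM \<mu> * lcQ h" by (rule mult_left_mono[OF Psi_LM(2)[OF h] Mz.fn_nonneg[OF mu]])
    finally show ?thesis .
  qed
  have add: "Sop \<mu> (\<lambda>x. f x + g x) = Sop \<mu> f + Sop \<mu> g" if "f \<in> LQ" "g \<in> LQ" for f g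
    using that Qz.L0_add[OF that] Mz.LD_add_app[OF mu Psi_LM(1) Psi_LM(1)]
    by (simp add: Sop_def Psi_add)
  have sc: "Sop \<mu> (\<lambda>x. c * f x) = c * Sop \<mu> f" if "f \<in> LQ" for f c
    using that Qz.L0_scale[OF that] Mz.LD_scale_app[OF mu Psi_LM(1)]
    by (simp add: Sop_def Psi_scale)
  have bd': "\<forall>h\<in>LQ. \<bar>Sop \<mu> h\<bar> \<le> fnM \<mu> * lcQ h" using bd by blast
  show "Sop \<mu> \<in> LDQ"
    unfolding LipDual_def mem_Collect_eq
  proof (intro conjI)
    show "\<exists>C. \<forall>h\<in>LQ. \<bar>Sop \<mu> h\<bar> \<le> C * lcQ h" using bd' by (rule exI)
  qed (use add sc in \<open>auto simp: Sop_def\<close>)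
  show "fnQ (Sop \<mu>) \<le> fnM \<mu>"
  proof (rule Qz.fn_leI)
    show "0 \<le> fnM \<mu>" by (rule Mz.fn_nonneg[OF mu])
    fix f assume f: "f \<in> LQ" "lcQ f \<le> 1"
    have "fnM \<mu> * lcQ f \<le> fnM \<mu>" using f(2) Mz.fn_nonneg[OF mu] by (simp add: mult_left_le)
    then show "\<bar>Sop \<mu> f\<bar> \<le> fnM \<mu>" using bd[OF f(1)] by linarith
  qed
qed

lemma Sop_add: "Sop (\<lambda>f. \<mu> f + \<mu>' f) = (\<lambda>h. Sop \<mu> h + Sop \<mu>' h)"
  by (rule ext) (simp add: Sop_def)

lemma Sop_scale: "Sop (\<lambda>f. c * \<mu> f) = (\<lambda>h. c * Sop \<mu> h)"
  by (rule ext) (simp add: Sop_def)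

lemma Sop_diff: "Sop (\<lambda>f. \<mu> f - \<mu>' f) = (\<lambda>h. Sop \<mu> h - Sop \<mu>' h)"
  by (rule ext) (simp add: Sop_def)

lemma Sop_delta: "Sop (dM x) = dQ (orb x)"
proof
  fix h show "Sop (dM x) h = dQ (orb x) h"
  proof (cases "h \<in> LQ")
    case True then show ?thesis using Psi_LM(1)[OF True] by (simp add: Sop_def delta_def Psi_def)
  next
    case False then show ?thesis by (simp add: Sop_def delta_def)
  qed
qed

lemma Sop_sum: "Sop (\<lambda>f. \<Sum>i<n. c i * dM (m i) f) = (\<lambda>h. \<Sum>i<n. c i * dQ (orb (m i)) h)"
proof
  fix h show "Sop (\<lambda>f. \<Sum>i<n. c i * dM (m i) f) h = (\<Sum>i<n. c i * dQ (orb (m i)) h)"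
  proof (cases "h \<in> LQ")
    case True then show ?thesis using Psi_LM(1)[OF True] by (simp add: Sop_def delta_def Psi_def)
  next
    case False then show ?thesis by (simp add: Sop_def delta_def)
  qed
qed

lemma Sop_DS: assumes psi: "\<psi> \<in> DSM" shows "Sop \<psi> \<in> DSQ"
proof -
  obtain n :: nat and c m where psi_eq: "\<psi> = (\<lambda>f. \<Sum>i<n. c i * dM (m i) f)"
    using psi unfolding Mz.DS_iff by blast
  show ?thesis unfolding psi_eq Sop_sum Qz.DS_iff
    by (intro exI[of _ n] exI[of _ c] exI[of _ "\<lambda>i. orb (m i)"]) (simp add: orb_QS)
qed

lemma DSQ_lift: assumes psi: "\<psi> \<in> DSQ" shows "\<exists>\<mu>\<in>DSM. Sop \<mu> = \<psi>"
proof -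
  obtain n :: nat and c A where psi_eq: "\<psi> = (\<lambda>f. \<Sum>i<n. c i * dQ (A i) f)" and A: "\<forall>i<n. A i \<in> QS"
    using psi unfolding Qz.DS_iff by blast
  define m where "m = (\<lambda>i. SOME x. A i = orb x)"
  have "\<forall>i<n. A i = orb (m i)" using A QS_E unfolding m_def by blast
  then have eq: "\<psi> = (\<lambda>f. \<Sum>i<n. c i * dQ (orb (m i)) f)" unfolding psi_eq
    by (intro ext sum.cong) auto
  have "(\<lambda>f. \<Sum>i<n. c i * dM (m i) f) \<in> DSM" unfolding Mz.DS_iff
    by (intro exI[of _ n] exI[of _ c] exI[of _ m]) simp
  then show ?thesis using eq Sop_sum by (intro bexI[of _ "\<lambda>f. \<Sum>i<n. c i * dM (m i) f"]) auto
qed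

lemma Sop_Free: assumes mu: "\<mu> \<in> FM" shows "Sop \<mu> \<in> FQ"
proof -
  have "\<exists>\<psi>\<in>DSQ. fnQ (\<lambda>f. Sop \<mu> f - \<psi> f) < e" if e: "e > 0" for e
  proof -
    obtain \<psi> where psi: "\<psi> \<in> DSM" "fnM (\<lambda>f. \<mu> f - \<psi> f) < e" using Mz.Free_approx[OF mu e] by blast
    have l: "(\<lambda>f. \<mu> f - \<psi> f) \<in> LDM" using Mz.LD_diff Mz.Free_LD[OF mu] Mz.DS_LD[OF psi(1)] by blast
    have "fnQ (\<lambda>f. Sop \<mu> f - Sop \<psi> f) \<le> fnM (\<lambda>f. \<mu> f - \<psi> f)"
      using Sop_LD(2)[OF l] by (simp add: Sop_diff)
    then show ?thesis using psi Sop_DS[OF psi(1)] by (intro bexI[of _ "Sop \<psi>"]) auto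
  qed
  then show ?thesis using Sop_LD(1)[OF Mz.Free_LD[OF mu]] by (simp add: Free_def)
qed

end

context tsetup
begin

interpretation Mz: pms "UNIV::'a set" dist z0 by (rule pms_M)
interpretation Qz: pms QS quot_dist q0 by (rule pms_Q)

lemma Q_LD: "\<phi> \<in> LDM \<Longrightarrow> Q \<phi> \<in> LDM" using Q_maps by blast

lemma Q_add: "\<phi> \<in> LDM \<Longrightarrow> \<psi> \<in> LDM \<Longrightarrow> Q (\<lambda>f. \<phi> f + \<psi> f) = (\<lambda>f. Q \<phi> f + Q \<psi> f)"
  using Q_lin unfolding lin_on_def by blast

lemma Q_scale: "\<phi> \<in> LDM \<Longrightarrow> Q (\<lambda>f. c * \<phi> f) = (\<lambda>f. c * Q \<phi> f)"
  using Q_lin unfolding lin_on_def by blast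

lemma Q_diff: "\<phi> \<in> LDM \<Longrightarrow> \<psi> \<in> LDM \<Longrightarrow> Q (\<lambda>f. \<phi> f - \<psi> f) = (\<lambda>f. Q \<phi> f - Q \<psi> f)"
proof -
  assume a: "\<phi> \<in> LDM" "\<psi> \<in> LDM"
  have "Q (\<lambda>f. \<phi> f + (\<lambda>f. -1 * \<psi> f) f) = (\<lambda>f. Q \<phi> f + Q (\<lambda>f. -1 * \<psi> f) f)"
    by (rule Q_add[OF a(1) Mz.LD_scale[OF a(2)]])
  then show ?thesis using Q_scale[OF a(2), of "-1"] by simp
qed

lemma Q_zero: "Q zerof = zerof"
proof -
  have "Q (\<lambda>f. 0 * zerof f) = (\<lambda>f. 0 * Q zerof f)" by (rule Q_scale[OF Mz.LD_zerof])
  then show ?thesis by (simp add: zerof_def)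
qed

lemma Q_idem: "\<mu> \<in> FM \<Longrightarrow> Q \<mu> = \<mu>"
proof -
  assume "\<mu> \<in> FM"
  then obtain \<phi> where "\<phi> \<in> LDM" "\<mu> = Q \<phi>" using Q_range by (metis imageE)
  then show ?thesis using Q_proj by simp
qed

lemma Q_Free: "\<phi> \<in> LDM \<Longrightarrow> Q \<phi> \<in> FM"
  using Q_range by blast

definition opQ where "opQ = opnorm_on LDM fnM fnM Q"

lemma op_bdd: "bdd_above (insert 0 {fnM (Q \<phi>) | \<phi>. \<phi> \<in> LDM \<and> fnM \<phi> \<le> 1})"
proof -
  obtain C where C: "\<forall>\<phi>\<in>LDM. fnM (Q \<phi>) \<le> C * fnM \<phi>" using Q_bdd by blast
  show ?thesis unfolding bdd_above_def
  proof (intro exI[of _ "\<bar>C\<bar>"] ballI)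
    fix z assume "z \<in> insert 0 {fnM (Q \<phi>) | \<phi>. \<phi> \<in> LDM \<and> fnM \<phi> \<le> 1}"
    then consider "z = 0" | \<phi> where "\<phi> \<in> LDM" "fnM \<phi> \<le> 1" "z = fnM (Q \<phi>)" by auto
    then show "z \<le> \<bar>C\<bar>"
    proof cases
      case 2
      have "C * fnM \<phi> \<le> \<bar>C\<bar>" using Mz.fn_nonneg[OF 2(1)] 2(2)
        by (smt (verit) mult_left_le mult_nonneg_nonneg mult_nonpos_nonneg abs_ge_self abs_mult)
      then show ?thesis using C 2 by force
    qed simp
  qed
qed

lemma op_nonneg: "opQ \<ge> 0"
  unfolding opQ_def opnorm_on_def by (rule cSup_upper[OF _ op_bdd]) auto

lemma op_le1: "\<phi> \<in> LDM \<Longrightarrow> fnM \<phi> \<le> 1 \<Longrightarrow> fnM (Q \<phi>) \<le> opQ"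
  unfolding opQ_def opnorm_on_def by (rule cSup_upper[OF _ op_bdd]) auto

lemma op_bound: assumes phi: "\<phi> \<in> LDM" shows "fnM (Q \<phi>) \<le> opQ * fnM \<phi>"
proof (cases "fnM \<phi> = 0")
  case True
  then have "\<phi> = zerof" by (rule Mz.fn_eq0[OF phi])
  then show ?thesis using Q_zero Mz.fn_zero True by simp
next
  case False
  then have a: "fnM \<phi> > 0" using Mz.fn_nonneg[OF phi] by simp
  define \<psi> where "\<psi> = (\<lambda>f. (1 / fnM \<phi>) * \<phi> f)"
  have psi: "\<psi> \<in> LDM" unfolding \<psi>_def by (rule Mz.LD_scale[OF phi])
  have "fnM \<psi> \<le> \<bar>1 / fnM \<phi>\<bar> * fnM \<phi>" unfolding \<psi>_def by (rule Mz.fn_scale[OF phi])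
  also have "\<dots> = 1" using a by simp
  finally have "fnM (Q \<psi>) \<le> opQ" by (rule op_le1[OF psi])
  moreover have "Q \<phi> = (\<lambda>f. fnM \<phi> * Q \<psi> f)"
  proof -
    have "Q (\<lambda>f. fnM \<phi> * \<psi> f) = (\<lambda>f. fnM \<phi> * Q \<psi> f)" by (rule Q_scale[OF psi])
    moreover have "(\<lambda>f. fnM \<phi> * \<psi> f) = \<phi>" using a by (simp add: \<psi>_def)
    ultimately show ?thesis by simp
  qed
  moreover have "fnM (\<lambda>f. fnM \<phi> * Q \<psi> f) \<le> \<bar>fnM \<phi>\<bar> * fnM (Q \<psi>)" by (rule Mz.fn_scale[OF Q_LD[OF psi]])
  ultimately show ?thesis using a by (simp add: mult.commute mult_right_mono order_trans)
qed

definition Top where "Top \<nu> = Q (Phi \<nu>)"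

lemma Top_Free: "\<nu> \<in> LDQ \<Longrightarrow> Top \<nu> \<in> FM"
  unfolding Top_def by (rule Q_Free[OF Phi_LD(1)])

lemma Top_bound: assumes nu: "\<nu> \<in> LDQ" shows "fnM (Top \<nu>) \<le> opQ * fnQ \<nu>"
proof -
  have "fnM (Top \<nu>) \<le> opQ * fnM (Phi \<nu>)" unfolding Top_def by (rule op_bound[OF Phi_LD(1)[OF nu]])
  also have "\<dots> \<le> opQ * fnQ \<nu>" by (rule mult_left_mono[OF Phi_LD(2)[OF nu] op_nonneg])
  finally show ?thesis .
qed

lemma Top_add: "\<nu> \<in> LDQ \<Longrightarrow> \<nu>' \<in> LDQ \<Longrightarrow> Top (\<lambda>h. \<nu> h + \<nu>' h) = (\<lambda>f. Top \<nu> f + Top \<nu>' f)"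
  unfolding Top_def Phi_add by (rule Q_add[OF Phi_LD(1) Phi_LD(1)])

lemma Top_scale: "\<nu> \<in> LDQ \<Longrightarrow> Top (\<lambda>h. c * \<nu> h) = (\<lambda>f. c * Top \<nu> f)"
  unfolding Top_def Phi_scale by (rule Q_scale[OF Phi_LD(1)])

lemma Top_diff: "\<nu> \<in> LDQ \<Longrightarrow> \<nu>' \<in> LDQ \<Longrightarrow> Top (\<lambda>h. \<nu> h - \<nu>' h) = (\<lambda>f. Top \<nu> f - Top \<nu>' f)"
proof -
  assume a: "\<nu> \<in> LDQ" "\<nu>' \<in> LDQ"
  have "Phi (\<lambda>h. \<nu> h - \<nu>' h) = (\<lambda>f. Phi \<nu> f - Phi \<nu>' f)" by (rule ext) (simp add: Phi_def)
  then show ?thesis unfolding Top_def using Q_diff[OF Phi_LD(1)[OF a(1)] Phi_LD(1)[OF a(2)]] by simp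
qed

lemma Top_inv: assumes nu: "\<nu> \<in> LDQ" and g: "g \<in> K" shows "Tgdd act z0 g (Top \<nu>) = Top \<nu>"
proof -
  define \<psi> where "\<psi> = Phi \<nu>"
  have psi: "\<psi> \<in> LDM" unfolding \<psi>_def by (rule Phi_LD(1)[OF nu])
  have Qpsi: "Q \<psi> \<in> LDM" by (rule Q_LD[OF psi])
  define \<xi> where "\<xi> = (\<lambda>f. \<psi> f - Q \<psi> f)"
  have xi: "\<xi> \<in> LDM" unfolding \<xi>_def by (rule Mz.LD_diff[OF psi Qpsi])
  have "Q \<xi> = (\<lambda>f. Q \<psi> f - Q (Q \<psi>) f)" unfolding \<xi>_def by (rule Q_diff[OF psi Qpsi])
  then have "Q \<xi> = zerof" using Q_proj psi by (simp add: zerof_def)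
  then have z: "Q (Tgdd act z0 g \<xi>) = zerof" using Q_ker g xi by blast
  have "Tgdd act z0 g \<xi> = (\<lambda>f. \<psi> f - Tgdd act z0 g (Q \<psi>) f)"
    unfolding \<xi>_def Tgdd_diff using Phi_inv[OF g] by (simp add: \<psi>_def)
  then have "Q (Tgdd act z0 g \<xi>) = (\<lambda>f. Q \<psi> f - Q (Tgdd act z0 g (Q \<psi>)) f)"
    using Q_diff[OF psi Tgdd_LD(1)[OF g Qpsi]] by simp
  moreover have "Q (Tgdd act z0 g (Q \<psi>)) = Tgdd act z0 g (Q \<psi>)"
    by (rule Q_idem[OF Tgdd_Free[OF g Q_Free[OF psi]]])
  ultimately have "(\<lambda>f. Q \<psi> f - Tgdd act z0 g (Q \<psi>) f) = zerof" using z by simp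
  then have "Tgdd act z0 g (Q \<psi>) = Q \<psi>"
    by (intro ext) (metis (mono_tags) eq_iff_diff_eq_0 zerof_def)
  then show ?thesis by (simp add: Top_def \<psi>_def)
qed

lemma RG_fix: assumes phi: "\<phi> \<in> FM" and inv: "\<And>g. g \<in> K \<Longrightarrow> Tgdd act z0 g \<phi> = \<phi>"
  shows "RG act z0 M \<phi> = \<phi>"
proof
  fix f show "RG act z0 M \<phi> f = \<phi> f"
  proof (cases "f \<in> LM")
    case True
    have "M (\<lambda>g. Tgdd act z0 g \<phi> f) = M (\<lambda>g. \<phi> f)"
      by (rule M_cong[OF F_Free[OF phi] D_const]) (simp add: inv)
    then show ?thesis using True by (simp add: RG_def M_const)
  next
    case False then show ?thesis using Mz.LD_out[OF Mz.Free_LD[OF phi]] by (simp add: RG_def)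
  qed
qed

lemma PG_Top: assumes nu: "\<nu> \<in> LDQ" shows "PG act z0 M Q (Top \<nu>) = Top \<nu>"
proof -
  have "RG act z0 M (Top \<nu>) = Top \<nu>" by (rule RG_fix[OF Top_Free[OF nu] Top_inv[OF nu]])
  then show ?thesis using Q_idem[OF Top_Free[OF nu]] by (simp add: PG_def)
qed

lemma exch_DS: assumes psi: "\<psi> \<in> DSM" and f: "f \<in> LM"
  shows "M (\<lambda>g. Tgdd act z0 g \<psi> f) = \<psi> (fbar f)"
proof -
  obtain n :: nat and c m where psi_eq: "\<psi> = (\<lambda>f. \<Sum>i<n. c i * dM (m i) f)"
    using psi unfolding Mz.DS_iff by blast
  define A where "A = (\<lambda>i g. c i * (f (act g (m i)) - f (act g z0)))"
  have AD: "A i \<in> D" for i unfolding A_def by (rule D_scale, rule D_diff) (use u_D[OF f] in auto)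
  have SD: "(\<lambda>g. \<Sum>i<n. A i g) \<in> D" by (rule D_sum) (rule AD)
  have "M (\<lambda>g. Tgdd act z0 g \<psi> f) = M (\<lambda>g. \<Sum>i<n. A i g)"
    by (rule M_cong[OF F_DS[OF psi] SD]) (simp add: psi_eq Tgdd_DS_formula[OF _ f] A_def)
  also have "\<dots> = (\<Sum>i<n. M (A i))" by (rule M_sum) (simp add: AD)
  also have "\<dots> = (\<Sum>i<n. c i * fbar f (m i))"
  proof (rule sum.cong[OF refl])
    fix i
    have "M (A i) = c i * M (\<lambda>g. f (act g (m i)) - f (act g z0))"
      unfolding A_def by (rule M_scale[OF D_diff[OF u_D[OF f] u_D[OF f]]])
    also have "\<dots> = c i * fbar f (m i)" by (simp add: M_diff[OF u_D[OF f] u_D[OF f]] fbar_def)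
    finally show "M (A i) = c i * fbar f (m i)" .
  qed
  also have "\<dots> = \<psi> (fbar f)" using fbar_LM(1)[OF f] by (simp add: psi_eq Mz.delta_app)
  finally show ?thesis .
qed

lemma exch: assumes mu: "\<mu> \<in> FM" and f: "f \<in> LM"
  shows "M (\<lambda>g. Tgdd act z0 g \<mu> f) = \<mu> (fbar f)"
proof -
  define x where "x = M (\<lambda>g. Tgdd act z0 g \<mu> f) - \<mu> (fbar f)"
  have L: "lcM f \<ge> 0" by (rule Mz.lc_nonneg[OF f])
  have "\<bar>x\<bar> \<le> e" if e: "e > 0" for e
  proof -
    have ep: "e / (2 * lcM f + 1) > 0" using e L by simp
    obtain \<psi> where psi: "\<psi> \<in> DSM" "fnM (\<lambda>f. \<mu> f - \<psi> f) < e / (2 * lcM f + 1)"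
      using Mz.Free_approx[OF mu ep] by blast
    define \<delta> where "\<delta> = (\<lambda>f. \<mu> f - \<psi> f)"
    have l: "\<delta> \<in> LDM" unfolding \<delta>_def using Mz.LD_diff Mz.Free_LD[OF mu] Mz.DS_LD[OF psi(1)] by blast
    have FD: "(\<lambda>g. Tgdd act z0 g \<mu> f) \<in> D" "(\<lambda>g. Tgdd act z0 g \<psi> f) \<in> D"
      using F_Free[OF mu] F_DS[OF psi(1)] by auto
    have "M (\<lambda>g. Tgdd act z0 g \<mu> f) - M (\<lambda>g. Tgdd act z0 g \<psi> f) = M (\<lambda>g. Tgdd act z0 g \<delta> f)"
      using M_diff[OF FD] by (simp add: \<delta>_def Tgdd_diff)
    also have "\<bar>\<dots>\<bar> \<le> fnM \<delta> * lcM f"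
    proof (rule M_bound)
      show "(\<lambda>g. Tgdd act z0 g \<delta> f) \<in> D" using D_diff[OF FD] by (simp add: \<delta>_def Tgdd_diff)
      show "\<And>g. g \<in> K \<Longrightarrow> \<bar>Tgdd act z0 g \<delta> f\<bar> \<le> fnM \<delta> * lcM f" by (rule Tgdd_bound[OF _ l f])
    qed
    finally have a1: "\<bar>M (\<lambda>g. Tgdd act z0 g \<mu> f) - M (\<lambda>g. Tgdd act z0 g \<psi> f)\<bar> \<le> fnM \<delta> * lcM f" .
    have "\<bar>\<mu> (fbar f) - \<psi> (fbar f)\<bar> = \<bar>\<delta> (fbar f)\<bar>" by (simp add: \<delta>_def)
    also have "\<dots> \<le> fnM \<delta> * lcM (fbar f)" by (rule Mz.fn_bound[OF l fbar_LM(1)[OF f]])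
    also have "\<dots> \<le> fnM \<delta> * lcM f" by (rule mult_left_mono[OF fbar_LM(2)[OF f] Mz.fn_nonneg[OF l]])
    finally have a2: "\<bar>\<mu> (fbar f) - \<psi> (fbar f)\<bar> \<le> fnM \<delta> * lcM f" .
    have a3: "M (\<lambda>g. Tgdd act z0 g \<psi> f) = \<psi> (fbar f)" by (rule exch_DS[OF psi(1) f])
    have "\<bar>x\<bar> \<le> 2 * (fnM \<delta> * lcM f)" using a1 a2 a3 unfolding x_def by linarith
    also have "\<dots> \<le> 2 * (e / (2 * lcM f + 1) * lcM f)"
    proof -
      have "fnM \<delta> * lcM f \<le> e / (2 * lcM f + 1) * lcM f"
        by (rule mult_right_mono) (use psi(2) L in \<open>simp_all add: \<delta>_def\<close>)
      then show ?thesis by linarith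
    qed
    also have "\<dots> \<le> e" using e L by (simp add: field_simps)
    finally show ?thesis .
  qed
  then have "x = 0"
    by (metis abs_ge_zero abs_not_less_zero field_lbound_gt_zero less_eq_real_def linorder_not_le zero_less_abs_iff)
  then show ?thesis by (simp add: x_def)
qed

lemma RG_exch: assumes mu: "\<mu> \<in> FM" shows "RG act z0 M \<mu> = Phi (Sop \<mu>)"
proof
  fix f show "RG act z0 M \<mu> f = Phi (Sop \<mu>) f"
  proof (cases "f \<in> LM")
    case True
    then show ?thesis using exch[OF mu True] hf_LQ(1)[OF True] Psi_hf[OF True]
      by (simp add: RG_def Phi_def Sop_def)
  next
    case False then show ?thesis by (simp add: RG_def Phi_def)
  qed
qed

lemma PG_eq: "\<mu> \<in> FM \<Longrightarrow> PG act z0 M Q \<mu> = Top (Sop \<mu>)"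
  by (simp add: PG_def Top_def RG_exch)

end

lemma eps0: fixes x :: real assumes "\<And>e. e > 0 \<Longrightarrow> \<bar>x\<bar> \<le> e" shows "x = 0"
proof (rule ccontr)
  assume "x \<noteq> 0"
  then have "\<bar>x\<bar> / 2 > 0" by simp
  from assms[OF this] \<open>x \<noteq> 0\<close> show False by simp
qed

context tsetup
begin

interpretation Mz: pms "UNIV::'a set" dist z0 by (rule pms_M)
interpretation Qz: pms QS quot_dist q0 by (rule pms_Q)

abbreviation "PGo \<equiv> PG act z0 M Q"

lemma PG_Free: "\<mu> \<in> FM \<Longrightarrow> PGo \<mu> \<in> FM"
  using PG_eq Top_Free Sop_LD(1) Mz.Free_LD by metis

lemma PG_add: "\<mu> \<in> FM \<Longrightarrow> \<mu>' \<in> FM \<Longrightarrow> PGo (\<lambda>f. \<mu> f + \<mu>' f) = (\<lambda>f. PGo \<mu> f + PGo \<mu>' f)"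
  by (simp add: PG_eq Mz.Free_add Sop_add Top_add Sop_LD(1) Mz.Free_LD)

lemma PG_scale: "\<mu> \<in> FM \<Longrightarrow> PGo (\<lambda>f. c * \<mu> f) = (\<lambda>f. c * PGo \<mu> f)"
  by (simp add: PG_eq Mz.Free_scale Sop_scale Top_scale Sop_LD(1) Mz.Free_LD)

lemma PG_diff: "\<mu> \<in> FM \<Longrightarrow> \<mu>' \<in> FM \<Longrightarrow> PGo (\<lambda>f. \<mu> f - \<mu>' f) = (\<lambda>f. PGo \<mu> f - PGo \<mu>' f)"
  by (simp add: PG_eq Mz.Free_diff Sop_diff Top_diff Sop_LD(1) Mz.Free_LD)

lemma PG_idem: "\<mu> \<in> FM \<Longrightarrow> PGo (PGo \<mu>) = PGo \<mu>"
  by (simp add: PG_eq PG_Top Sop_LD(1) Mz.Free_LD)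

lemma PG_bound: "\<mu> \<in> FM \<Longrightarrow> fnM (PGo \<mu>) \<le> opQ * fnM \<mu>"
proof -
  assume mu: "\<mu> \<in> FM"
  have "fnM (PGo \<mu>) \<le> opQ * fnQ (Sop \<mu>)" unfolding PG_eq[OF mu]
    by (rule Top_bound[OF Sop_LD(1)[OF Mz.Free_LD[OF mu]]])
  also have "\<dots> \<le> opQ * fnM \<mu>" by (rule mult_left_mono[OF Sop_LD(2)[OF Mz.Free_LD[OF mu]] op_nonneg])
  finally show ?thesis .
qed

lemma fbar_Lip0G: "f \<in> LM \<Longrightarrow> fbar f \<in> Lip0G G act z0"
  unfolding Lip0G_def using fbar_LM(1) fbar_inv by blast

context
  fixes Y :: "('a set \<Rightarrow> real) set"
  assumes Y_sub: "Y \<subseteq> LQ"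
    and Y_sep: "\<forall>\<mu>\<in>FQ. \<mu> \<noteq> zerof \<longrightarrow> (\<exists>f\<in>Y. \<mu> f \<noteq> 0)"
    and ker_sub: "{\<mu> \<in> FM. PGo \<mu> = zerof} \<subseteq> preannih UNIV dist z0 (Psi G act ` Y)"
begin

lemma sep_zero: assumes nu: "\<nu> \<in> FQ" and z: "\<And>y. y \<in> Y \<Longrightarrow> \<nu> y = 0" shows "\<nu> = zerof"
  using Y_sep nu z by blast

lemma ker_Y: assumes "\<mu> \<in> FM" "PGo \<mu> = zerof" "y \<in> Y" shows "\<mu> (Psi G act y) = 0"
  using ker_sub assms unfolding preannih_def by blast

lemma ker_eq: "{\<mu> \<in> FM. PGo \<mu> = zerof} = preannih UNIV dist z0 (Lip0G G act z0)"
proof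
  show "{\<mu> \<in> FM. PGo \<mu> = zerof} \<subseteq> preannih UNIV dist z0 (Lip0G G act z0)"
  proof
    fix \<mu> assume "\<mu> \<in> {\<mu> \<in> FM. PGo \<mu> = zerof}"
    then have mu: "\<mu> \<in> FM" and k: "PGo \<mu> = zerof" by auto
    have "Sop \<mu> = zerof"
    proof (rule sep_zero[OF Sop_Free[OF mu]])
      fix y assume y: "y \<in> Y"
      then have "y \<in> LQ" using Y_sub by blast
      then show "Sop \<mu> y = 0" using ker_Y[OF mu k y] by (simp add: Sop_def)
    qed
    then have "\<mu> f = 0" if f: "f \<in> Lip0G G act z0" for f
    proof -
      have fL: "f \<in> LM" using f by (simp add: Lip0G_def)
      have "\<mu> f = \<mu> (Psi G act (hf f))" using Psi_hf[OF fL] fbar_G[OF f] by simp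
      also have "\<dots> = Sop \<mu> (hf f)" using hf_LQ(1)[OF fL] by (simp add: Sop_def)
      also have "\<dots> = 0" using \<open>Sop \<mu> = zerof\<close> by (simp add: zerof_def)
      finally show ?thesis .
    qed
    then show "\<mu> \<in> preannih UNIV dist z0 (Lip0G G act z0)" using mu by (simp add: preannih_def)
  qed
next
  show "preannih UNIV dist z0 (Lip0G G act z0) \<subseteq> {\<mu> \<in> FM. PGo \<mu> = zerof}"
  proof
    fix \<mu> assume "\<mu> \<in> preannih UNIV dist z0 (Lip0G G act z0)"
    then have mu: "\<mu> \<in> FM" and an: "\<And>f. f \<in> Lip0G G act z0 \<Longrightarrow> \<mu> f = 0" by (auto simp: preannih_def)
    have "Phi (Sop \<mu>) = zerof"
    proof
      fix f show "Phi (Sop \<mu>) f = zerof f"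
      proof (cases "f \<in> LM")
        case True
        then show ?thesis using hf_LQ(1)[OF True] Psi_hf[OF True] an[OF fbar_Lip0G[OF True]]
          by (simp add: Phi_def Sop_def zerof_def)
      next
        case False then show ?thesis by (simp add: Phi_def zerof_def)
      qed
    qed
    then have "PGo \<mu> = zerof" using PG_eq[OF mu] Q_zero by (simp add: Top_def)
    then show "\<mu> \<in> {\<mu> \<in> FM. PGo \<mu> = zerof}" using mu by simp
  qed
qed

lemma ST_id: assumes nu: "\<nu> \<in> FQ" shows "Sop (Top \<nu>) = \<nu>"
proof -
  have nuL: "\<nu> \<in> LDQ" by (rule Qz.Free_LD[OF nu])
  have key: "\<nu> y = Top \<nu> (Psi G act y)" if y: "y \<in> Y" for y
  proof -
    have yL: "y \<in> LQ" using y Y_sub by blast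
    define L where "L = (1 + opQ) * lcQ y"
    have L: "L \<ge> 0" unfolding L_def using op_nonneg Qz.lc_nonneg[OF yL] by simp
    have "\<bar>\<nu> y - Top \<nu> (Psi G act y)\<bar> \<le> e" if e: "e > 0" for e
    proof -
      have ep: "e / (L + 1) > 0" using e L by simp
      obtain \<psi> where psi: "\<psi> \<in> DSQ" "fnQ (\<lambda>f. \<nu> f - \<psi> f) < e / (L + 1)"
        using Qz.Free_approx[OF nu ep] by blast
      obtain \<mu> where mu: "\<mu> \<in> DSM" "Sop \<mu> = \<psi>" using DSQ_lift[OF psi(1)] by blast
      have muF: "\<mu> \<in> FM" by (rule Mz.DS_Free[OF mu(1)])
      have psiL: "\<psi> \<in> LDQ" by (rule Qz.DS_LD[OF psi(1)])
      have PGmu: "PGo \<mu> = Top \<psi>" using PG_eq[OF muF] mu(2) by simp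
      define w where "w = (\<lambda>f. \<mu> f - PGo \<mu> f)"
      have wF: "w \<in> FM" unfolding w_def by (rule Mz.Free_diff[OF muF PG_Free[OF muF]])
      have "PGo w = (\<lambda>f. PGo \<mu> f - PGo (PGo \<mu>) f)" unfolding w_def by (rule PG_diff[OF muF PG_Free[OF muF]])
      then have "PGo w = zerof" using PG_idem[OF muF] by (simp add: zerof_def)
      then have "w (Psi G act y) = 0" by (rule ker_Y[OF wF _ y])
      then have a1: "\<mu> (Psi G act y) = Top \<psi> (Psi G act y)" using PGmu by (simp add: w_def)
      have a2: "\<psi> y = \<mu> (Psi G act y)" using mu(2) yL by (auto simp: Sop_def)
      define \<delta> where "\<delta> = (\<lambda>f. \<nu> f - \<psi> f)"
      have dL: "\<delta> \<in> LDQ" unfolding \<delta>_def by (rule Qz.LD_diff[OF nuL psiL])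
      have b1: "\<bar>\<nu> y - \<psi> y\<bar> \<le> fnQ \<delta> * lcQ y" using Qz.fn_bound[OF dL yL] by (simp add: \<delta>_def)
      have "Top \<psi> (Psi G act y) - Top \<nu> (Psi G act y) = Top (\<lambda>h. -1 * \<delta> h) (Psi G act y)"
      proof -
        have "(\<lambda>h. -1 * \<delta> h) = (\<lambda>h. \<psi> h - \<nu> h)" by (simp add: \<delta>_def)
        then show ?thesis using Top_diff[OF psiL nuL] by simp
      qed
      moreover have "\<bar>Top (\<lambda>h. -1 * \<delta> h) (Psi G act y)\<bar> \<le> opQ * fnQ \<delta> * lcQ y"
      proof -
        have sL: "(\<lambda>h. -1 * \<delta> h) \<in> LDQ" by (rule Qz.LD_scale[OF dL])
        have "\<bar>Top (\<lambda>h. -1 * \<delta> h) (Psi G act y)\<bar> \<le> fnM (Top (\<lambda>h. -1 * \<delta> h)) * lcM (Psi G act y)"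
          by (rule Mz.fn_bound[OF Mz.Free_LD[OF Top_Free[OF sL]] Psi_LM(1)[OF yL]])
        also have "\<dots> \<le> (opQ * fnQ \<delta>) * lcQ y"
        proof (rule mult_mono)
          have "fnM (Top (\<lambda>h. -1 * \<delta> h)) \<le> opQ * fnQ (\<lambda>h. -1 * \<delta> h)" by (rule Top_bound[OF sL])
          also have "\<dots> \<le> opQ * fnQ \<delta>"
            using Qz.fn_scale[OF dL, of "-1"] op_nonneg by (simp add: mult_left_mono)
          finally show "fnM (Top (\<lambda>h. -1 * \<delta> h)) \<le> opQ * fnQ \<delta>" .
          show "lcM (Psi G act y) \<le> lcQ y" by (rule Psi_LM(2)[OF yL])
          show "0 \<le> opQ * fnQ \<delta>" using op_nonneg Qz.fn_nonneg[OF dL] by simp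
          show "0 \<le> lcM (Psi G act y)" by (rule Mz.lc_nonneg[OF Psi_LM(1)[OF yL]])
        qed
        finally show ?thesis by simp
      qed
      ultimately have b2: "\<bar>Top \<psi> (Psi G act y) - Top \<nu> (Psi G act y)\<bar> \<le> opQ * fnQ \<delta> * lcQ y" by simp
      have "\<bar>\<nu> y - Top \<nu> (Psi G act y)\<bar> \<le> fnQ \<delta> * L"
        using b1 b2 a1 a2 unfolding L_def by (simp add: algebra_simps)
      also have "\<dots> \<le> e / (L + 1) * L"
        by (rule mult_right_mono) (use psi(2) L in \<open>simp_all add: \<delta>_def\<close>)
      also have "\<dots> \<le> e" using e L by (simp add: field_simps)
      finally show ?thesis .
    qed
    then show ?thesis using eps0[of "\<nu> y - Top \<nu> (Psi G act y)"] by simp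
  qed
  define dd where "dd = (\<lambda>h. \<nu> h - Sop (Top \<nu>) h)"
  have ddF: "dd \<in> FQ" unfolding dd_def by (rule Qz.Free_diff[OF nu Sop_Free[OF Top_Free[OF nuL]]])
  have "dd = zerof"
  proof (rule sep_zero[OF ddF])
    fix y assume y: "y \<in> Y"
    then have "y \<in> LQ" using Y_sub by blast
    then show "dd y = 0" using key[OF y] by (simp add: dd_def Sop_def)
  qed
  then show ?thesis by (intro ext) (metis dd_def eq_iff_diff_eq_0 zerof_def)
qed

lemma main:
  shows "{\<mu> \<in> FM. PGo \<mu> = zerof} = preannih UNIV dist z0 (Lip0G G act z0)
       \<and> (\<exists>T S.
            lin_on FQ T
          \<and> T ` FQ = PGo ` FM
          \<and> (\<forall>x. T (dQ (orb x)) = PGo (dM x))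
          \<and> (\<forall>\<nu>\<in>FQ. fnM (T \<nu>) \<le> opnorm_on LDM fnM fnM Q * fnQ \<nu>)
          \<and> lin_on FM S
          \<and> S ` FM \<subseteq> FQ
          \<and> (\<forall>x. S (dM x) = dQ (orb x))
          \<and> (\<forall>\<mu>\<in>FM. fnQ (S \<mu>) \<le> fnM \<mu>)
          \<and> (\<forall>\<nu>\<in>FQ. S (T \<nu>) = \<nu>)
          \<and> (\<forall>\<mu>\<in>PGo ` FM. T (S \<mu>) = \<mu>))
       \<and> (PGo ` FM \<subseteq> FM
          \<and> lin_on FM PGo
          \<and> (\<exists>C. \<forall>\<mu>\<in>FM. fnM (PGo \<mu>) \<le> C * fnM \<mu>)
          \<and> (\<forall>\<mu>\<in>FM. PGo (PGo \<mu>) = PGo \<mu>))"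
proof (intro conjI)
  show "{\<mu> \<in> FM. PGo \<mu> = zerof} = preannih UNIV dist z0 (Lip0G G act z0)" by (rule ker_eq)
  show "PGo ` FM \<subseteq> FM" using PG_Free by blast
  show "lin_on FM PGo" unfolding lin_on_def using PG_add PG_scale by blast
  show "\<exists>C. \<forall>\<mu>\<in>FM. fnM (PGo \<mu>) \<le> C * fnM \<mu>" using PG_bound by blast
  show "\<forall>\<mu>\<in>FM. PGo (PGo \<mu>) = PGo \<mu>" using PG_idem by blast
  show "\<exists>T S.
            lin_on FQ T
          \<and> T ` FQ = PGo ` FM
          \<and> (\<forall>x. T (dQ (orb x)) = PGo (dM x))
          \<and> (\<forall>\<nu>\<in>FQ. fnM (T \<nu>) \<le> opnorm_on LDM fnM fnM Q * fnQ \<nu>)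
          \<and> lin_on FM S
          \<and> S ` FM \<subseteq> FQ
          \<and> (\<forall>x. S (dM x) = dQ (orb x))
          \<and> (\<forall>\<mu>\<in>FM. fnQ (S \<mu>) \<le> fnM \<mu>)
          \<and> (\<forall>\<nu>\<in>FQ. S (T \<nu>) = \<nu>)
          \<and> (\<forall>\<mu>\<in>PGo ` FM. T (S \<mu>) = \<mu>)"
  proof (intro exI[of _ Top] exI[of _ Sop] conjI)
    show "lin_on FQ Top" unfolding lin_on_def using Top_add Top_scale Qz.Free_LD by blast
    show "Top ` FQ = PGo ` FM"
    proof
      show "Top ` FQ \<subseteq> PGo ` FM"
      proof
        fix z assume "z \<in> Top ` FQ"
        then obtain \<nu> where nu: "\<nu> \<in> FQ" "z = Top \<nu>" by blast
        then have "z = PGo (Top \<nu>)" using PG_Top[OF Qz.Free_LD[OF nu(1)]] by simp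
        then show "z \<in> PGo ` FM" using Top_Free[OF Qz.Free_LD[OF nu(1)]] by blast
      qed
      show "PGo ` FM \<subseteq> Top ` FQ"
      proof
        fix z assume "z \<in> PGo ` FM"
        then obtain \<mu> where mu: "\<mu> \<in> FM" "z = PGo \<mu>" by blast
        then have "z = Top (Sop \<mu>)" using PG_eq by simp
        then show "z \<in> Top ` FQ" using Sop_Free[OF mu(1)] by blast
      qed
    qed
    show "\<forall>x. Top (dQ (orb x)) = PGo (dM x)"
      using PG_eq[OF Mz.delta_Free[OF UNIV_I]] Sop_delta by simp
    show "\<forall>\<nu>\<in>FQ. fnM (Top \<nu>) \<le> opnorm_on LDM fnM fnM Q * fnQ \<nu>"
      using Top_bound Qz.Free_LD unfolding opQ_def by blast
    show "lin_on FM Sop" unfolding lin_on_def using Sop_add Sop_scale by blast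
    show "Sop ` FM \<subseteq> FQ" using Sop_Free by blast
    show "\<forall>x. Sop (dM x) = dQ (orb x)" using Sop_delta by blast
    show "\<forall>\<mu>\<in>FM. fnQ (Sop \<mu>) \<le> fnM \<mu>" using Sop_LD(2) Mz.Free_LD by blast
    show "\<forall>\<nu>\<in>FQ. Sop (Top \<nu>) = \<nu>" using ST_id by blast
    show "\<forall>\<mu>\<in>PGo ` FM. Top (Sop \<mu>) = \<mu>"
    proof
      fix \<mu> assume "\<mu> \<in> PGo ` FM"
      then obtain \<mu>' where mu': "\<mu>' \<in> FM" "\<mu> = PGo \<mu>'" by blast
      have "Top (Sop \<mu>) = PGo \<mu>" using PG_eq[OF PG_Free[OF mu'(1)]] mu'(2) by simp
      also have "\<dots> = \<mu>" using PG_idem[OF mu'(1)] mu'(2) by simp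
      finally show "Top (Sop \<mu>) = \<mu>" .
    qed
  qed
qed

end

end

lemma lip_cont:
  fixes f :: "'a::metric_space \<Rightarrow> real"
  assumes "\<And>a b. \<bar>f a - f b\<bar> \<le> C * dist a b"
  shows "continuous_on UNIV f"
proof (rule lipschitz_on_continuous_on)
  show "\<bar>C\<bar>-lipschitz_on UNIV f"
  proof (rule lipschitz_onI)
    fix x y :: 'a
    have "C * dist x y \<le> \<bar>C\<bar> * dist x y" by (simp add: mult_right_mono)
    then show "dist (f x) (f y) \<le> \<bar>C\<bar> * dist x y" using assms[of x y] by (simp add: dist_real_def)
  qed simp
qed

lemma orbit_cont:
  assumes act: "isometric_action \<tau> G act"
  shows "continuous_map \<tau> euclidean (\<lambda>k. act k x)"
proof -
  have c1: "continuous_map \<tau> (prod_topology \<tau> euclidean) (\<lambda>k. (k, x))"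
    by (rule continuous_map_pairedI) auto
  have c2: "continuous_map (prod_topology \<tau> euclidean) euclidean (\<lambda>(g, x). act g x)"
    using act by (simp add: isometric_action_def)
  have "continuous_map \<tau> euclidean ((\<lambda>(g, x). act g x) \<circ> (\<lambda>k. (k, x)))"
    by (rule continuous_map_compose[OF c1 c2])
  then show ?thesis by (simp add: o_def)
qed

lemma orbit_fun_bound:
  fixes f :: "'a::metric_space \<Rightarrow> real" and act :: "'g \<Rightarrow> 'a \<Rightarrow> 'a"
  assumes lip: "\<And>a b. \<bar>f a - f b\<bar> \<le> C * dist a b" and bd: "bounded ((\<lambda>g. act g x) ` K)"
  shows "\<exists>B. \<forall>k\<in>K. \<bar>f (act k x)\<bar> \<le> B"
proof -
  obtain B where B: "\<forall>y\<in>(\<lambda>g. act g x) ` K. dist x y \<le> B" using bd bounded_any_center by blast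
  have "\<bar>f (act k x)\<bar> \<le> \<bar>C\<bar> * B + \<bar>f x\<bar>" if k: "k \<in> K" for k
  proof -
    have d: "dist (act k x) x \<le> B" using B k by (simp add: dist_commute)
    have "\<bar>f (act k x) - f x\<bar> \<le> C * dist (act k x) x" by (rule lip)
    also have "\<dots> \<le> \<bar>C\<bar> * dist (act k x) x" by (simp add: mult_right_mono)
    also have "\<dots> \<le> \<bar>C\<bar> * B" by (rule mult_left_mono[OF d]) simp
    finally show ?thesis by linarith
  qed
  then show ?thesis by blast
qed

section \<open>BUC case\<close>

lemma BUC_iff: "F \<in> BUC \<tau> G \<longleftrightarrow> (\<exists>C. \<forall>g\<in>carrier G. \<bar>F g\<bar> \<le> C) \<and>
      (\<forall>e>0. \<exists>U. openin \<tau> U \<and> \<one>\<^bsub>G\<^esub> \<in> U \<and>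
         (\<forall>g\<in>carrier G. \<forall>h\<in>U. \<bar>F (g \<otimes>\<^bsub>G\<^esub> h) - F g\<bar> < e \<and> \<bar>F (h \<otimes>\<^bsub>G\<^esub> g) - F g\<bar> < e))"
  by (simp add: BUC_def)

context
  fixes \<tau> :: "'g topology" and G :: "('g, 'x) monoid_scheme"
  assumes tg: "topological_group \<tau> G"
begin

lemma grpT: "group G" using tg by (simp add: topological_group_def)
lemma topT: "topspace \<tau> = carrier G" using tg by (simp add: topological_group_def)

lemma openK: "openin \<tau> U \<Longrightarrow> h \<in> U \<Longrightarrow> h \<in> carrier G"
  using openin_subset topT by blast

lemma multT: "g \<in> carrier G \<Longrightarrow> h \<in> carrier G \<Longrightarrow> g \<otimes>\<^bsub>G\<^esub> h \<in> carrier G"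
  by (rule monoid.m_closed[OF group.is_monoid[OF grpT]])

lemma oneT: "\<one>\<^bsub>G\<^esub> \<in> carrier G"
  by (rule monoid.one_closed[OF group.is_monoid[OF grpT]])

lemma BUC_cong: assumes F: "F \<in> BUC \<tau> G" and eq: "\<And>g. g \<in> carrier G \<Longrightarrow> F g = F' g"
  shows "F' \<in> BUC \<tau> G"
proof -
  obtain C where C: "\<forall>g\<in>carrier G. \<bar>F g\<bar> \<le> C" using F by (auto simp: BUC_iff)
  have b: "\<forall>g\<in>carrier G. \<bar>F' g\<bar> \<le> C" using C eq by simp
  have u: "\<exists>U. openin \<tau> U \<and> \<one>\<^bsub>G\<^esub> \<in> U \<and>
         (\<forall>g\<in>carrier G. \<forall>h\<in>U. \<bar>F' (g \<otimes>\<^bsub>G\<^esub> h) - F' g\<bar> < e \<and> \<bar>F' (h \<otimes>\<^bsub>G\<^esub> g) - F' g\<bar> < e)"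
    if e: "e > 0" for e
  proof -
    obtain U where U: "openin \<tau> U" "\<one>\<^bsub>G\<^esub> \<in> U"
      "\<forall>g\<in>carrier G. \<forall>h\<in>U. \<bar>F (g \<otimes>\<^bsub>G\<^esub> h) - F g\<bar> < e \<and> \<bar>F (h \<otimes>\<^bsub>G\<^esub> g) - F g\<bar> < e"
      using F e unfolding BUC_iff by blast
    have "\<forall>g\<in>carrier G. \<forall>h\<in>U. \<bar>F' (g \<otimes>\<^bsub>G\<^esub> h) - F' g\<bar> < e \<and> \<bar>F' (h \<otimes>\<^bsub>G\<^esub> g) - F' g\<bar> < e"
    proof (intro ballI)
      fix g h assume g: "g \<in> carrier G" and h: "h \<in> U"
      have hK: "h \<in> carrier G" by (rule openK[OF U(1) h])
      show "\<bar>F' (g \<otimes>\<^bsub>G\<^esub> h) - F' g\<bar> < e \<and> \<bar>F' (h \<otimes>\<^bsub>G\<^esub> g) - F' g\<bar> < e"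
      proof -
        have "\<bar>F (g \<otimes>\<^bsub>G\<^esub> h) - F g\<bar> < e \<and> \<bar>F (h \<otimes>\<^bsub>G\<^esub> g) - F g\<bar> < e" using U(3) g h by blast
        then show ?thesis using eq[OF g] eq[OF multT[OF g hK]] eq[OF multT[OF hK g]] by simp
      qed
    qed
    then show ?thesis using U(1,2) by blast
  qed
  show ?thesis unfolding BUC_iff using b u by blast
qed

lemma BUC_add: assumes F: "F \<in> BUC \<tau> G" and F': "F' \<in> BUC \<tau> G"
  shows "(\<lambda>g. F g + F' g) \<in> BUC \<tau> G"
proof -
  obtain C where C: "\<forall>g\<in>carrier G. \<bar>F g\<bar> \<le> C" using F by (auto simp: BUC_iff)
  obtain C' where C': "\<forall>g\<in>carrier G. \<bar>F' g\<bar> \<le> C'" using F' by (auto simp: BUC_iff)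
  have b: "\<forall>g\<in>carrier G. \<bar>F g + F' g\<bar> \<le> C + C'" using C C' by (smt (verit))
  have u: "\<exists>U. openin \<tau> U \<and> \<one>\<^bsub>G\<^esub> \<in> U \<and>
         (\<forall>g\<in>carrier G. \<forall>h\<in>U. \<bar>(F (g \<otimes>\<^bsub>G\<^esub> h) + F' (g \<otimes>\<^bsub>G\<^esub> h)) - (F g + F' g)\<bar> < e
            \<and> \<bar>(F (h \<otimes>\<^bsub>G\<^esub> g) + F' (h \<otimes>\<^bsub>G\<^esub> g)) - (F g + F' g)\<bar> < e)"
    if e: "e > 0" for e
  proof -
    have e2: "e/2 > 0" using e by simp
    obtain U where U: "openin \<tau> U" "\<one>\<^bsub>G\<^esub> \<in> U"
      "\<forall>g\<in>carrier G. \<forall>h\<in>U. \<bar>F (g \<otimes>\<^bsub>G\<^esub> h) - F g\<bar> < e/2 \<and> \<bar>F (h \<otimes>\<^bsub>G\<^esub> g) - F g\<bar> < e/2"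
      using F e2 unfolding BUC_iff by blast
    obtain U' where U': "openin \<tau> U'" "\<one>\<^bsub>G\<^esub> \<in> U'"
      "\<forall>g\<in>carrier G. \<forall>h\<in>U'. \<bar>F' (g \<otimes>\<^bsub>G\<^esub> h) - F' g\<bar> < e/2 \<and> \<bar>F' (h \<otimes>\<^bsub>G\<^esub> g) - F' g\<bar> < e/2"
      using F' e2 unfolding BUC_iff by blast
    have "\<forall>g\<in>carrier G. \<forall>h\<in>U \<inter> U'. \<bar>(F (g \<otimes>\<^bsub>G\<^esub> h) + F' (g \<otimes>\<^bsub>G\<^esub> h)) - (F g + F' g)\<bar> < e
            \<and> \<bar>(F (h \<otimes>\<^bsub>G\<^esub> g) + F' (h \<otimes>\<^bsub>G\<^esub> g)) - (F g + F' g)\<bar> < e"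
    proof (intro ballI)
      fix g h assume g: "g \<in> carrier G" and h: "h \<in> U \<inter> U'"
      have "\<bar>F (g \<otimes>\<^bsub>G\<^esub> h) - F g\<bar> < e/2" "\<bar>F (h \<otimes>\<^bsub>G\<^esub> g) - F g\<bar> < e/2"
           "\<bar>F' (g \<otimes>\<^bsub>G\<^esub> h) - F' g\<bar> < e/2" "\<bar>F' (h \<otimes>\<^bsub>G\<^esub> g) - F' g\<bar> < e/2"
        using U(3) U'(3) g h by auto
      then show "\<bar>(F (g \<otimes>\<^bsub>G\<^esub> h) + F' (g \<otimes>\<^bsub>G\<^esub> h)) - (F g + F' g)\<bar> < e
            \<and> \<bar>(F (h \<otimes>\<^bsub>G\<^esub> g) + F' (h \<otimes>\<^bsub>G\<^esub> g)) - (F g + F' g)\<bar> < e" by linarith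
    qed
    then show ?thesis using U(1,2) U'(1,2) openin_Int by blast
  qed
  show ?thesis unfolding BUC_iff using b u by blast
qed

lemma BUC_scale: assumes F: "F \<in> BUC \<tau> G" shows "(\<lambda>g. c * F g) \<in> BUC \<tau> G"
proof -
  obtain C where C: "\<forall>g\<in>carrier G. \<bar>F g\<bar> \<le> C" using F by (auto simp: BUC_iff)
  have b: "\<forall>g\<in>carrier G. \<bar>c * F g\<bar> \<le> \<bar>c\<bar> * C" using C by (simp add: abs_mult mult_left_mono)
  have u: "\<exists>U. openin \<tau> U \<and> \<one>\<^bsub>G\<^esub> \<in> U \<and>
         (\<forall>g\<in>carrier G. \<forall>h\<in>U. \<bar>c * F (g \<otimes>\<^bsub>G\<^esub> h) - c * F g\<bar> < e \<and> \<bar>c * F (h \<otimes>\<^bsub>G\<^esub> g) - c * F g\<bar> < e)"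
    if e: "e > 0" for e
  proof -
    have e2: "e/(\<bar>c\<bar>+1) > 0" using e by simp
    obtain U where U: "openin \<tau> U" "\<one>\<^bsub>G\<^esub> \<in> U"
      "\<forall>g\<in>carrier G. \<forall>h\<in>U. \<bar>F (g \<otimes>\<^bsub>G\<^esub> h) - F g\<bar> < e/(\<bar>c\<bar>+1) \<and> \<bar>F (h \<otimes>\<^bsub>G\<^esub> g) - F g\<bar> < e/(\<bar>c\<bar>+1)"
      using F e2 unfolding BUC_iff by blast
    have k: "\<bar>c * a - c * b\<bar> < e" if "\<bar>a - b\<bar> < e/(\<bar>c\<bar>+1)" for a b
    proof -
      have "\<bar>c * a - c * b\<bar> = \<bar>c\<bar> * \<bar>a - b\<bar>" by (simp add: abs_mult[symmetric] algebra_simps)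
      also have "\<dots> \<le> \<bar>c\<bar> * (e/(\<bar>c\<bar>+1))" using that by (intro mult_left_mono) auto
      also have "\<dots> < e" using e by (simp add: field_simps)
      finally show ?thesis .
    qed
    show ?thesis using U k by blast
  qed
  show ?thesis unfolding BUC_iff using b u by blast
qed

lemma BUC_const: "(\<lambda>g. c) \<in> BUC \<tau> G"
  unfolding BUC_iff using oneT topT by (auto intro!: exI[of _ "topspace \<tau>"])

lemma BUC_lim:
  assumes b: "\<And>g. g \<in> carrier G \<Longrightarrow> \<bar>F g\<bar> \<le> C"
    and ap: "\<And>e. e > 0 \<Longrightarrow> \<exists>F'\<in>BUC \<tau> G. \<forall>g\<in>carrier G. \<bar>F g - F' g\<bar> \<le> e"
  shows "F \<in> BUC \<tau> G"
proof -
  have u: "\<exists>U. openin \<tau> U \<and> \<one>\<^bsub>G\<^esub> \<in> U \<and>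
         (\<forall>g\<in>carrier G. \<forall>h\<in>U. \<bar>F (g \<otimes>\<^bsub>G\<^esub> h) - F g\<bar> < e \<and> \<bar>F (h \<otimes>\<^bsub>G\<^esub> g) - F g\<bar> < e)"
    if e: "e > 0" for e
  proof -
    have e3: "e/3 > 0" using e by simp
    obtain F' where F': "F' \<in> BUC \<tau> G" "\<forall>g\<in>carrier G. \<bar>F g - F' g\<bar> \<le> e/3"
      using ap[OF e3] by blast
    obtain U where U: "openin \<tau> U" "\<one>\<^bsub>G\<^esub> \<in> U"
      "\<forall>g\<in>carrier G. \<forall>h\<in>U. \<bar>F' (g \<otimes>\<^bsub>G\<^esub> h) - F' g\<bar> < e/3 \<and> \<bar>F' (h \<otimes>\<^bsub>G\<^esub> g) - F' g\<bar> < e/3"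
      using F'(1) e3 unfolding BUC_iff by blast
    have "\<forall>g\<in>carrier G. \<forall>h\<in>U. \<bar>F (g \<otimes>\<^bsub>G\<^esub> h) - F g\<bar> < e \<and> \<bar>F (h \<otimes>\<^bsub>G\<^esub> g) - F g\<bar> < e"
    proof (intro ballI)
      fix g h assume g: "g \<in> carrier G" and h: "h \<in> U"
      have hK: "h \<in> carrier G" by (rule openK[OF U(1) h])
      have "\<bar>F (g \<otimes>\<^bsub>G\<^esub> h) - F' (g \<otimes>\<^bsub>G\<^esub> h)\<bar> \<le> e/3" "\<bar>F (h \<otimes>\<^bsub>G\<^esub> g) - F' (h \<otimes>\<^bsub>G\<^esub> g)\<bar> \<le> e/3"
           "\<bar>F g - F' g\<bar> \<le> e/3"
        using F'(2) g multT[OF g hK] multT[OF hK g] by auto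
      moreover have "\<bar>F' (g \<otimes>\<^bsub>G\<^esub> h) - F' g\<bar> < e/3" "\<bar>F' (h \<otimes>\<^bsub>G\<^esub> g) - F' g\<bar> < e/3"
        using U(3) g h by auto
      ultimately show "\<bar>F (g \<otimes>\<^bsub>G\<^esub> h) - F g\<bar> < e \<and> \<bar>F (h \<otimes>\<^bsub>G\<^esub> g) - F g\<bar> < e" by linarith
    qed
    then show ?thesis using U(1,2) by blast
  qed
  show ?thesis unfolding BUC_iff using b u by blast
qed

end

lemma BUC_act:
  fixes \<tau> :: "'g topology" and G :: "('g, 'x) monoid_scheme" and act :: "'g \<Rightarrow> 'a::metric_space \<Rightarrow> 'a"
    and f :: "'a \<Rightarrow> real"
  assumes tg: "topological_group \<tau> G" and act: "isometric_action \<tau> G act" and sin: "SIN \<tau> G"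
    and bd: "bounded ((\<lambda>g. act g x) ` carrier G)"
    and lip: "\<And>a b. \<bar>f a - f b\<bar> \<le> C * dist a b"
  shows "(\<lambda>k. f (act k x)) \<in> BUC \<tau> G"
proof -
  interpret grp: group G by (rule grpT[OF tg])
  have act_one: "act \<one>\<^bsub>G\<^esub> y = y" for y using act by (simp add: isometric_action_def)
  have act_mult: "act (g \<otimes>\<^bsub>G\<^esub> h) y = act g (act h y)" if "g \<in> carrier G" "h \<in> carrier G" for g h y
    using act that by (simp add: isometric_action_def)
  have act_iso: "dist (act g y) (act g z) = dist y z" if "g \<in> carrier G" for g y z
    using act that by (simp add: isometric_action_def)
  obtain B where B: "\<forall>k\<in>carrier G. \<bar>f (act k x)\<bar> \<le> B" using orbit_fun_bound[of f C act x "carrier G", OF lip bd] by blast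
  have u: "\<exists>U. openin \<tau> U \<and> \<one>\<^bsub>G\<^esub> \<in> U \<and>
         (\<forall>g\<in>carrier G. \<forall>h\<in>U. \<bar>f (act (g \<otimes>\<^bsub>G\<^esub> h) x) - f (act g x)\<bar> < e
            \<and> \<bar>f (act (h \<otimes>\<^bsub>G\<^esub> g) x) - f (act g x)\<bar> < e)"
    if e: "e > 0" for e
  proof -
    define \<delta> where "\<delta> = e / (\<bar>C\<bar> + 1)"
    have dp: "\<delta> > 0" using e by (simp add: \<delta>_def)
    define U0 where "U0 = {k \<in> topspace \<tau>. act k x \<in> ball x \<delta>}"
    have U0: "openin \<tau> U0" unfolding U0_def
      by (rule openin_continuous_map_preimage[OF orbit_cont[OF act]]) simp
    have oneU0: "\<one>\<^bsub>G\<^esub> \<in> U0" using dp oneT[OF tg] topT[OF tg] act_one by (simp add: U0_def)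
    have "\<exists>V. openin \<tau> V \<and> \<one>\<^bsub>G\<^esub> \<in> V \<and> V \<subseteq> U0 \<and>
           (\<forall>g\<in>carrier G. (\<lambda>v. g \<otimes>\<^bsub>G\<^esub> v \<otimes>\<^bsub>G\<^esub> inv\<^bsub>G\<^esub> g) ` V = V)"
      using sin[unfolded SIN_def, rule_format, OF conjI[OF U0 oneU0]] .
    then obtain V where V: "openin \<tau> V" "\<one>\<^bsub>G\<^esub> \<in> V" "V \<subseteq> U0"
      "\<forall>g\<in>carrier G. (\<lambda>v. g \<otimes>\<^bsub>G\<^esub> v \<otimes>\<^bsub>G\<^esub> inv\<^bsub>G\<^esub> g) ` V = V"
      by (elim exE conjE) (rule that)
    have est: "\<bar>f (act g y) - f (act g x)\<bar> < e" if g: "g \<in> carrier G" and y: "dist y x < \<delta>" for g y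
    proof -
      have "\<bar>f (act g y) - f (act g x)\<bar> \<le> C * dist y x" using lip[of "act g y" "act g x"] act_iso[OF g] by simp
      also have "\<dots> \<le> \<bar>C\<bar> * dist y x" by (simp add: mult_right_mono)
      also have "\<dots> \<le> \<bar>C\<bar> * \<delta>" using y by (intro mult_left_mono) auto
      also have "\<dots> < e" using e by (simp add: \<delta>_def field_simps)
      finally show ?thesis .
    qed
    have inV: "dist (act h x) x < \<delta>" if "h \<in> V" for h
      using that V(3) by (auto simp: U0_def dist_commute)
    have "\<forall>g\<in>carrier G. \<forall>h\<in>V. \<bar>f (act (g \<otimes>\<^bsub>G\<^esub> h) x) - f (act g x)\<bar> < e
            \<and> \<bar>f (act (h \<otimes>\<^bsub>G\<^esub> g) x) - f (act g x)\<bar> < e"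
    proof (intro ballI conjI)
      fix g h assume g: "g \<in> carrier G" and h: "h \<in> V"
      have hK: "h \<in> carrier G" by (rule openK[OF tg V(1) h])
      show "\<bar>f (act (g \<otimes>\<^bsub>G\<^esub> h) x) - f (act g x)\<bar> < e"
        using est[OF g inV[OF h]] act_mult[OF g hK] by simp
      define w where "w = inv\<^bsub>G\<^esub> g \<otimes>\<^bsub>G\<^esub> h \<otimes>\<^bsub>G\<^esub> inv\<^bsub>G\<^esub> (inv\<^bsub>G\<^esub> g)"
      have "w \<in> (\<lambda>v. inv\<^bsub>G\<^esub> g \<otimes>\<^bsub>G\<^esub> v \<otimes>\<^bsub>G\<^esub> inv\<^bsub>G\<^esub> (inv\<^bsub>G\<^esub> g)) ` V"
        unfolding w_def by (rule imageI[OF h])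
      then have wV: "w \<in> V" using V(4)[rule_format, OF grp.inv_closed[OF g]] by simp
      have wK: "w \<in> carrier G" by (rule openK[OF tg V(1) wV])
      have "g \<otimes>\<^bsub>G\<^esub> w = h \<otimes>\<^bsub>G\<^esub> g" using g hK unfolding w_def by (simp add: grp.m_assoc[symmetric])
      then have "act (h \<otimes>\<^bsub>G\<^esub> g) x = act g (act w x)" using act_mult[OF g wK] by simp
      then show "\<bar>f (act (h \<otimes>\<^bsub>G\<^esub> g) x) - f (act g x)\<bar> < e"
        using est[OF g inV[OF wV]] by simp
    qed
    then show ?thesis using V(1,2) by blast
  qed
  show ?thesis unfolding BUC_iff using B u by blast
qed

section \<open>Linf case\<close>

context
  fixes \<tau> :: "'g topology" and G :: "('g, 'x) monoid_scheme" and H :: "'g measure"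
  assumes tg: "topological_group \<tau> G" and haar: "left_haar_measure \<tau> G H"
begin

lemma spaceH: "space H = carrier G" using haar topT[OF tg] by (simp add: left_haar_measure_def)
lemma setsH: "sets H = sigma_sets (topspace \<tau>) {U. openin \<tau> U}" using haar by (simp add: left_haar_measure_def)

lemma Linf_iff: "F \<in> Linf H \<longleftrightarrow> F \<in> borel_measurable H \<and> (\<exists>C. AE g in H. \<bar>F g\<bar> \<le> C)"
  by (simp add: Linf_def)

lemma Linf_cong: assumes F: "F \<in> Linf H" and eq: "\<And>g. g \<in> carrier G \<Longrightarrow> F g = F' g"
  shows "F' \<in> Linf H"
proof -
  obtain C where C: "AE g in H. \<bar>F g\<bar> \<le> C" using F by (auto simp: Linf_iff)
  have "AE g in H. \<bar>F' g\<bar> \<le> C" by (rule AE_mp[OF C AE_I2]) (simp add: spaceH eq)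
  moreover have "F' \<in> borel_measurable H"
    using F measurable_cong[of H F F' borel] eq by (simp add: spaceH Linf_iff)
  ultimately show ?thesis by (auto simp: Linf_iff)
qed

lemma Linf_add: assumes F: "F \<in> Linf H" and F': "F' \<in> Linf H" shows "(\<lambda>g. F g + F' g) \<in> Linf H"
proof -
  obtain C where C: "AE g in H. \<bar>F g\<bar> \<le> C" using F by (auto simp: Linf_iff)
  obtain C' where C': "AE g in H. \<bar>F' g\<bar> \<le> C'" using F' by (auto simp: Linf_iff)
  have "AE g in H. \<bar>F g + F' g\<bar> \<le> C + C'" by (rule AE_mp[OF AE_conjI[OF C C']]) auto
  moreover have "(\<lambda>g. F g + F' g) \<in> borel_measurable H" using F F' by (auto simp: Linf_iff)
  ultimately show ?thesis by (auto simp: Linf_iff)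
qed

lemma Linf_scale: assumes F: "F \<in> Linf H" shows "(\<lambda>g. c * F g) \<in> Linf H"
proof -
  obtain C where C: "AE g in H. \<bar>F g\<bar> \<le> C" using F by (auto simp: Linf_iff)
  have "AE g in H. \<bar>c * F g\<bar> \<le> \<bar>c\<bar> * C" by (rule AE_mp[OF C]) (auto simp: abs_mult mult_left_mono)
  moreover have "(\<lambda>g. c * F g) \<in> borel_measurable H" using F by (auto simp: Linf_iff)
  ultimately show ?thesis by (auto simp: Linf_iff)
qed

lemma Linf_const: "(\<lambda>g. c) \<in> Linf H"
  by (auto simp: Linf_iff intro!: exI[of _ "\<bar>c\<bar>"])

lemma Linf_lim:
  assumes b: "\<And>g. g \<in> carrier G \<Longrightarrow> \<bar>F g\<bar> \<le> C"
    and ap: "\<And>e. e > 0 \<Longrightarrow> \<exists>F'\<in>Linf H. \<forall>g\<in>carrier G. \<bar>F g - F' g\<bar> \<le> e"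
  shows "F \<in> Linf H"
proof -
  define Fn where "Fn = (\<lambda>n. SOME F'. F' \<in> Linf H \<and> (\<forall>g\<in>carrier G. \<bar>F g - F' g\<bar> \<le> inverse (real (Suc n))))"
  have Fn: "Fn n \<in> Linf H \<and> (\<forall>g\<in>carrier G. \<bar>F g - Fn n g\<bar> \<le> inverse (real (Suc n)))" for n
  proof -
    have "\<exists>F'. F' \<in> Linf H \<and> (\<forall>g\<in>carrier G. \<bar>F g - F' g\<bar> \<le> inverse (real (Suc n)))"
      using ap[of "inverse (real (Suc n))"] by auto
    then show ?thesis unfolding Fn_def by (rule someI_ex)
  qed
  have lim: "(\<lambda>n. Fn n g) \<longlonglongrightarrow> F g" if g: "g \<in> space H" for g
  proof (rule metric_LIMSEQ_I)
    fix r :: real assume r: "r > 0"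
    obtain no where no: "inverse (real (Suc no)) < r" using reals_Archimedean[OF r] by auto
    have "dist (Fn n g) (F g) < r" if n: "n \<ge> no" for n
    proof -
      have "dist (Fn n g) (F g) \<le> inverse (real (Suc n))"
        using Fn[of n] g spaceH by (auto simp: dist_real_def abs_minus_commute)
      also have "\<dots> \<le> inverse (real (Suc no))" using n by (simp add: field_simps)
      finally show ?thesis using no by linarith
    qed
    then show "\<exists>no. \<forall>n\<ge>no. dist (Fn n g) (F g) < r" by blast
  qed
  have "F \<in> borel_measurable H"
    by (rule borel_measurable_LIMSEQ_real[OF lim]) (use Fn in \<open>auto simp: Linf_iff\<close>)
  moreover have "AE g in H. \<bar>F g\<bar> \<le> C" by (rule AE_I2) (simp add: spaceH b)
  ultimately show ?thesis by (auto simp: Linf_iff)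
qed

lemma Linf_cont:
  assumes c: "continuous_map \<tau> euclidean (F :: 'g \<Rightarrow> real)" and b: "\<And>g. g \<in> carrier G \<Longrightarrow> \<bar>F g\<bar> \<le> C"
  shows "F \<in> Linf H"
proof -
  have "F \<in> borel_measurable H"
  proof (rule borel_measurableI)
    fix S :: "real set" assume S: "open S"
    have "openin \<tau> {x \<in> topspace \<tau>. F x \<in> S}"
      by (rule openin_continuous_map_preimage[OF c]) (use S in simp)
    moreover have "F -` S \<inter> space H = {x \<in> topspace \<tau>. F x \<in> S}" using spaceH topT[OF tg] by auto
    ultimately show "F -` S \<inter> space H \<in> sets H" unfolding setsH by (auto intro: sigma_sets.Basic)
  qed
  moreover have "AE g in H. \<bar>F g\<bar> \<le> C" by (rule AE_I2) (simp add: spaceH b)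
  ultimately show ?thesis by (auto simp: Linf_iff)
qed

end

lemma act_cont:
  fixes act :: "'g \<Rightarrow> 'a::metric_space \<Rightarrow> 'a" and f :: "'a \<Rightarrow> real"
  assumes act: "isometric_action \<tau> G act" and lip: "\<And>a b. \<bar>f a - f b\<bar> \<le> C * dist a b"
  shows "continuous_map \<tau> euclidean (\<lambda>k. f (act k x))"
proof -
  have "continuous_map \<tau> euclidean (f \<circ> (\<lambda>k. act k x))"
    by (rule continuous_map_compose[OF orbit_cont[OF act]]) (simp add: lip_cont[OF lip])
  then show ?thesis by (simp add: o_def)
qed

theorem theorem4p7:
  fixes \<tau> :: "'g topology" and G :: "('g, 'x) monoid_scheme"
    and act :: "'g \<Rightarrow> 'a::metric_space \<Rightarrow> 'a" and z0 :: 'a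
    and M :: "('g \<Rightarrow> real) \<Rightarrow> real"
    and Q :: "(('a \<Rightarrow> real) \<Rightarrow> real) \<Rightarrow> (('a \<Rightarrow> real) \<Rightarrow> real)"
    and Y :: "('a set \<Rightarrow> real) set"
  assumes tg: "topological_group \<tau> G" and haus: "Hausdorff_space \<tau>"
    and lc_or_sin:
      "(SIN \<tau> G \<and> bi_invariant_mean_BUC \<tau> G M)
       \<or> (locally_compact_space \<tau> \<and>
          (\<exists>H. left_haar_measure \<tau> G H \<and> bi_invariant_mean_Linf G H M))"
    and act: "isometric_action \<tau> G act"
    and bdd_orbits: "\<forall>x. bounded ((\<lambda>g. act g x) ` carrier G)"
    and Q_maps: "\<forall>\<phi>\<in>LipDual UNIV dist z0. Q \<phi> \<in> LipDual UNIV dist z0"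
    and Q_lin: "lin_on (LipDual UNIV dist z0) Q"
    and Q_bdd: "\<exists>C. \<forall>\<phi>\<in>LipDual UNIV dist z0.
                  fnorm UNIV dist z0 (Q \<phi>) \<le> C * fnorm UNIV dist z0 \<phi>"
    and Q_proj: "\<forall>\<phi>\<in>LipDual UNIV dist z0. Q (Q \<phi>) = Q \<phi>"
    and Q_range: "Q ` LipDual UNIV dist z0 = Free UNIV dist z0"
    and Q_ker: "\<forall>g\<in>carrier G. \<forall>\<phi>\<in>LipDual UNIV dist z0.
                  Q \<phi> = zerof \<longrightarrow> Q (Tgdd act z0 g \<phi>) = zerof"
    and Y_sub: "Y \<subseteq> Lip0 (quot_space G act) quot_dist (orbcl G act z0)"
    and Y_sep: "\<forall>\<mu>\<in>Free (quot_space G act) quot_dist (orbcl G act z0).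
                  \<mu> \<noteq> zerof \<longrightarrow> (\<exists>f\<in>Y. \<mu> f \<noteq> 0)"
    and ker_sub: "{\<mu> \<in> Free UNIV dist z0. PG act z0 M Q \<mu> = zerof}
                    \<subseteq> preannih UNIV dist z0 (Psi G act ` Y)"
  shows "{\<mu> \<in> Free UNIV dist z0. PG act z0 M Q \<mu> = zerof}
           = preannih UNIV dist z0 (Lip0G G act z0)
       \<and> (\<exists>T S.
            lin_on (Free (quot_space G act) quot_dist (orbcl G act z0)) T
          \<and> T ` Free (quot_space G act) quot_dist (orbcl G act z0)
              = PG act z0 M Q ` Free UNIV dist z0
          \<and> (\<forall>x. T (delta (quot_space G act) quot_dist (orbcl G act z0) (orbcl G act x))
                  = PG act z0 M Q (delta UNIV dist z0 x))
          \<and> (\<forall>\<nu>\<in>Free (quot_space G act) quot_dist (orbcl G act z0).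
                fnorm UNIV dist z0 (T \<nu>)
                  \<le> opnorm_on (LipDual UNIV dist z0) (fnorm UNIV dist z0) (fnorm UNIV dist z0) Q
                    * fnorm (quot_space G act) quot_dist (orbcl G act z0) \<nu>)
          \<and> lin_on (Free UNIV dist z0) S
          \<and> S ` Free UNIV dist z0 \<subseteq> Free (quot_space G act) quot_dist (orbcl G act z0)
          \<and> (\<forall>x. S (delta UNIV dist z0 x)
                  = delta (quot_space G act) quot_dist (orbcl G act z0) (orbcl G act x))
          \<and> (\<forall>\<mu>\<in>Free UNIV dist z0.
                fnorm (quot_space G act) quot_dist (orbcl G act z0) (S \<mu>) \<le> fnorm UNIV dist z0 \<mu>)
          \<and> (\<forall>\<nu>\<in>Free (quot_space G act) quot_dist (orbcl G act z0). S (T \<nu>) = \<nu>)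
          \<and> (\<forall>\<mu>\<in>PG act z0 M Q ` Free UNIV dist z0. T (S \<mu>) = \<mu>))
       \<and> (PG act z0 M Q ` Free UNIV dist z0 \<subseteq> Free UNIV dist z0
          \<and> lin_on (Free UNIV dist z0) (PG act z0 M Q)
          \<and> (\<exists>C. \<forall>\<mu>\<in>Free UNIV dist z0.
                fnorm UNIV dist z0 (PG act z0 M Q \<mu>) \<le> C * fnorm UNIV dist z0 \<mu>)
          \<and> (\<forall>\<mu>\<in>Free UNIV dist z0. PG act z0 M Q (PG act z0 M Q \<mu>) = PG act z0 M Q \<mu>))"
proof -
  have grp: "group G" by (rule grpT[OF tg])
  have a1: "\<And>x. act \<one>\<^bsub>G\<^esub> x = x" using act by (simp add: isometric_action_def)
  have a2: "\<And>g h x. g \<in> carrier G \<Longrightarrow> h \<in> carrier G \<Longrightarrow> act (g \<otimes>\<^bsub>G\<^esub> h) x = act g (act h x)"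
    using act by (simp add: isometric_action_def)
  have a3: "\<And>g x y. g \<in> carrier G \<Longrightarrow> dist (act g x) (act g y) = dist x y"
    using act by (simp add: isometric_action_def)
  have "\<exists>D. tsetup G act z0 M D Q"
  proof (cases "SIN \<tau> G \<and> bi_invariant_mean_BUC \<tau> G M")
    case True
    then have sin: "SIN \<tau> G" and mean: "bi_invariant_mean_BUC \<tau> G M" by auto
    have m1: "\<And>F F'. F \<in> BUC \<tau> G \<Longrightarrow> F' \<in> BUC \<tau> G \<Longrightarrow> (\<And>g. g \<in> carrier G \<Longrightarrow> F g = F' g) \<Longrightarrow> M F = M F'"
      using mean unfolding bi_invariant_mean_BUC_def by blast
    have m2: "\<And>F F'. F \<in> BUC \<tau> G \<Longrightarrow> F' \<in> BUC \<tau> G \<Longrightarrow> M (\<lambda>g. F g + F' g) = M F + M F'"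
      using mean unfolding bi_invariant_mean_BUC_def by blast
    have m3: "\<And>F c. F \<in> BUC \<tau> G \<Longrightarrow> M (\<lambda>g. c * F g) = c * M F"
      using mean unfolding bi_invariant_mean_BUC_def by blast
    have m4: "\<And>F. F \<in> BUC \<tau> G \<Longrightarrow> (\<And>g. g \<in> carrier G \<Longrightarrow> F g \<ge> 0) \<Longrightarrow> M F \<ge> 0"
      using mean unfolding bi_invariant_mean_BUC_def by blast
    have m5: "M (\<lambda>g. 1) = 1"
      using mean unfolding bi_invariant_mean_BUC_def by blast
    have m6: "\<And>F h. F \<in> BUC \<tau> G \<Longrightarrow> h \<in> carrier G \<Longrightarrow> M (\<lambda>g. F (h \<otimes>\<^bsub>G\<^esub> g)) = M F"
      using mean unfolding bi_invariant_mean_BUC_def by blast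
    have m7: "\<And>F h. F \<in> BUC \<tau> G \<Longrightarrow> h \<in> carrier G \<Longrightarrow> M (\<lambda>g. F (g \<otimes>\<^bsub>G\<^esub> h)) = M F"
      using mean unfolding bi_invariant_mean_BUC_def by blast
    have dact: "\<And>f C x. (\<And>a b. \<bar>f a - f b\<bar> \<le> C * dist a b) \<Longrightarrow> (\<lambda>k. f (act k x)) \<in> BUC \<tau> G"
      using BUC_act[OF tg act sin] bdd_orbits by blast
    have "tsetup G act z0 M (BUC \<tau> G) Q"
      by (rule tsetup.intro[OF grp a1 a2 a3 BUC_cong[OF tg] m1 BUC_add[OF tg] BUC_scale[OF tg] BUC_const[OF tg]
            m2 m3 m4 m5 m6 m7 BUC_lim[OF tg] dact Q_maps Q_lin Q_bdd Q_proj Q_range Q_ker])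
    then show ?thesis by blast
  next
    case False
    then obtain H where haar: "left_haar_measure \<tau> G H" and mean: "bi_invariant_mean_Linf G H M"
      using lc_or_sin by blast
    have sp: "space H = carrier G" by (rule spaceH[OF tg haar])
    have m1: "\<And>F F'. F \<in> Linf H \<Longrightarrow> F' \<in> Linf H \<Longrightarrow> (\<And>g. g \<in> carrier G \<Longrightarrow> F g = F' g) \<Longrightarrow> M F = M F'"
    proof -
      fix F F' assume "F \<in> Linf H" "F' \<in> Linf H" "\<And>g. g \<in> carrier G \<Longrightarrow> F g = F' g"
      moreover have "AE g in H. F g = F' g" by (rule AE_I2) (simp add: sp calculation)
      ultimately show "M F = M F'" using mean unfolding bi_invariant_mean_Linf_def by blast
    qed
    have m2: "\<And>F F'. F \<in> Linf H \<Longrightarrow> F' \<in> Linf H \<Longrightarrow> M (\<lambda>g. F g + F' g) = M F + M F'"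
      using mean unfolding bi_invariant_mean_Linf_def by blast
    have m3: "\<And>F c. F \<in> Linf H \<Longrightarrow> M (\<lambda>g. c * F g) = c * M F"
      using mean unfolding bi_invariant_mean_Linf_def by blast
    have m4: "\<And>F. F \<in> Linf H \<Longrightarrow> (\<And>g. g \<in> carrier G \<Longrightarrow> F g \<ge> 0) \<Longrightarrow> M F \<ge> 0"
    proof -
      fix F assume "F \<in> Linf H" "\<And>g. g \<in> carrier G \<Longrightarrow> F g \<ge> 0"
      moreover have "AE g in H. F g \<ge> 0" by (rule AE_I2) (simp add: sp calculation)
      ultimately show "M F \<ge> 0" using mean unfolding bi_invariant_mean_Linf_def by blast
    qed
    have m5: "M (\<lambda>g. 1) = 1"
      using mean unfolding bi_invariant_mean_Linf_def by blast
    have m6: "\<And>F h. F \<in> Linf H \<Longrightarrow> h \<in> carrier G \<Longrightarrow> M (\<lambda>g. F (h \<otimes>\<^bsub>G\<^esub> g)) = M F"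
      using mean unfolding bi_invariant_mean_Linf_def by blast
    have m7: "\<And>F h. F \<in> Linf H \<Longrightarrow> h \<in> carrier G \<Longrightarrow> M (\<lambda>g. F (g \<otimes>\<^bsub>G\<^esub> h)) = M F"
      using mean unfolding bi_invariant_mean_Linf_def by blast
    have dact: "(\<lambda>k. f (act k x)) \<in> Linf H" if lip: "\<And>a b. \<bar>f a - f b\<bar> \<le> C * dist a b" for f C x
    proof -
      obtain B where "\<forall>k\<in>carrier G. \<bar>f (act k x)\<bar> \<le> B"
        using orbit_fun_bound[of f C act x "carrier G", OF lip] bdd_orbits by blast
      then show ?thesis using Linf_cont[OF tg haar act_cont[OF act lip]] by blast
    qed
    have "tsetup G act z0 M (Linf H) Q"
      by (rule tsetup.intro[OF grp a1 a2 a3 Linf_cong[OF tg haar] m1 Linf_add[OF tg haar] Linf_scale[OF tg haar]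
            Linf_const[OF tg haar] m2 m3 m4 m5 m6 m7 Linf_lim[OF tg haar] dact Q_maps Q_lin Q_bdd Q_proj Q_range Q_ker])
    then show ?thesis by blast
  qed
  then obtain D where ts: "tsetup G act z0 M D Q" by blast
  show ?thesis by (rule tsetup.main[OF ts Y_sub Y_sep ker_sub])
qed

end
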